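(* Let $H$ be a real or complex Hilbert space of dimension $n$, let $N\ge n$, let $F=\{f_i\}_{i=1}^N$ be a frame for $H$ with frame operator $S_F$, and let $\{q_i\}_{i=1}^N$ be the weight number sequence. Set $c=\max\{q_i\|S_F^{-1/2}f_i\|^2:1\le i\le N\}$, $\Upsilon_1=\{i: q_i\|S_F^{-1/2}f_i\|^2=c\}$, $\Upsilon_2=\{1,\dots,N\}\setminus\Upsilon_1$, and $H_j=\operatorname{span}\{f_i: i\in\Upsilon_j\}$ for $j=1,2$. If $H_1\cap H_2=\{0\}$, then the canonical dual $\{S_F^{-1}f_i\}_{i=1}^N$ is a 1-erasure probabilistic spectrally optimal dual of $F$.
   Context: Inner products are linear in the first argument. A frame for the $n$-dimensional space $H$ is a finite sequence spanning $H$. Analysis operator: $\Theta_F f=(\langle f,f_i\rangle)_i$. Synthesis operator: $\Theta_F^*(c)=\sum_i c_if_i$. Frame operator: $S_F=\Theta_F^*\Theta_F$, which is positive and invertible. A dual frame of $F$ is a frame $G=\{g_i\}_{i=1}^N$ with $f=\sum_i\langle f,f_i\rangle g_i=\sum_i\langle f,g_i\rangle f_i$ for all $f\in H$. A probability sequence $\{p_i\}_{i=1}^N$ satisfies $0\le p_i\le1$ and $\sum p_i=1$. The weight numbers are $q_i=\frac{\sum_j p_j}{\sum_j p_j-p_i}\cdot\frac{N-1}{n}$ (assumed well defined). $\mathcal{D}_1^p$ is the set of $N\times N$ diagonal matrices having exactly one nonzero diagonal entry, that entry being $q_i$ in position $(i,i)$. $\mathcal{R}_1^p(F,G)=\max\{\rho(\Theta_G^*D\Theta_F):D\in\mathcal{D}_1^p\}$,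 where $\rho$ is spectral radius. A dual $G$ of $F$ is a 1-erasure probabilistic spectrally optimal dual of $F$ if $\mathcal{R}_1^p(F,G)=\inf\{\mathcal{R}_1^p(F,G'): G' \text{ a dual frame of } F\}$. *)

theory Defs
  imports "Jordan_Normal_Form.Spectral_Radius" "Jordan_Normal_Form.Schur_Decomposition"
begin

text \<open>The Hilbert space H of dimension n is modelled as K^n inside complex^n, where the
  scalar field K is either the reals (K = Reals) or the complex numbers (K = UNIV).
  The inner product is the standard one, linear in the first argument:
  inner v w = sum_k v_k * conj (w_k), i.e. v \<bullet>c w.  Finite sequences f_1..f_N are
  functions on indices 0..N-1.\<close>

definition hspace :: "complex set \<Rightarrow> nat \<Rightarrow> complex vec set" where
  "hspace K n = {v \<in> carrier_vec n. \<forall>k<n. v $ k \<in> K}"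

definition kspan :: "complex set \<Rightarrow> nat \<Rightarrow> (nat \<Rightarrow> complex vec) \<Rightarrow> nat set \<Rightarrow> complex vec set" where
  "kspan K n f A = {vec n (\<lambda>k. \<Sum>i\<in>A. c i * (f i $ k)) | c. \<forall>i\<in>A. c i \<in> K}"

definition is_frame :: "complex set \<Rightarrow> nat \<Rightarrow> nat \<Rightarrow> (nat \<Rightarrow> complex vec) \<Rightarrow> bool" where
  "is_frame K n N f \<longleftrightarrow> (\<forall>i<N. f i \<in> hspace K n) \<and> kspan K n f {..<N} = hspace K n"

text \<open>Analysis operator (N x n matrix): (Theta_F v)_i = <v, f_i>.\<close>
definition analysis_op :: "nat \<Rightarrow> nat \<Rightarrow> (nat \<Rightarrow> complex vec) \<Rightarrow> complex mat" where
  "analysis_op n N f = mat N n (\<lambda>(i,k). cnj (f i $ k))"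

definition synthesis_op :: "nat \<Rightarrow> nat \<Rightarrow> (nat \<Rightarrow> complex vec) \<Rightarrow> complex mat" where
  "synthesis_op n N f = mat n N (\<lambda>(k,i). f i $ k)"

definition frame_op :: "nat \<Rightarrow> nat \<Rightarrow> (nat \<Rightarrow> complex vec) \<Rightarrow> complex mat" where
  "frame_op n N f = synthesis_op n N f * analysis_op n N f"

definition inv_mat :: "nat \<Rightarrow> complex mat \<Rightarrow> complex mat" where
  "inv_mat n A = (THE B. B \<in> carrier_mat n n \<and> A * B = 1\<^sub>m n \<and> B * A = 1\<^sub>m n)"

definition inv_sqrt_mat :: "nat \<Rightarrow> complex mat \<Rightarrow> complex mat" where
  "inv_sqrt_mat n A = (THE R. R \<in> carrier_mat n n \<and> mat_adjoint R = R \<and>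
      (\<forall>v\<in>carrier_vec n. 0 \<le> Re ((R *\<^sub>v v) \<bullet>c v)) \<and> R * R = inv_mat n A)"

definition norm_sq :: "complex vec \<Rightarrow> real" where
  "norm_sq v = Re (v \<bullet>c v)"

definition is_dual_frame :: "complex set \<Rightarrow> nat \<Rightarrow> nat \<Rightarrow> (nat \<Rightarrow> complex vec) \<Rightarrow> (nat \<Rightarrow> complex vec) \<Rightarrow> bool" where
  "is_dual_frame K n N f g \<longleftrightarrow> is_frame K n N g \<and>
     (\<forall>v\<in>hspace K n.
        v = vec n (\<lambda>k. \<Sum>i<N. (v \<bullet>c f i) * (g i $ k)) \<and>
        v = vec n (\<lambda>k. \<Sum>i<N. (v \<bullet>c g i) * (f i $ k)))"

definition prob_seq :: "nat \<Rightarrow> (nat \<Rightarrow> real) \<Rightarrow> bool" where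
  "prob_seq N p \<longleftrightarrow> (\<forall>i<N. 0 \<le> p i \<and> p i \<le> 1) \<and> (\<Sum>i<N. p i) = 1"

definition weight :: "nat \<Rightarrow> nat \<Rightarrow> (nat \<Rightarrow> real) \<Rightarrow> nat \<Rightarrow> real" where
  "weight n N p i = (\<Sum>j<N. p j) / ((\<Sum>j<N. p j) - p i) * ((real N - 1) / real n)"

definition diag_one :: "nat \<Rightarrow> nat \<Rightarrow> (nat \<Rightarrow> real) \<Rightarrow> nat \<Rightarrow> complex mat" where
  "diag_one n N p i = mat N N (\<lambda>(a,b). if a = i \<and> b = i then complex_of_real (weight n N p i) else 0)"

definition D1p :: "nat \<Rightarrow> nat \<Rightarrow> (nat \<Rightarrow> real) \<Rightarrow> complex mat set" where
  "D1p n N p = diag_one n N p ` {..<N}"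

definition R1p :: "nat \<Rightarrow> nat \<Rightarrow> (nat \<Rightarrow> real) \<Rightarrow> (nat \<Rightarrow> complex vec) \<Rightarrow> (nat \<Rightarrow> complex vec) \<Rightarrow> real" where
  "R1p n N p f g = Max {spectral_radius (synthesis_op n N g * D * analysis_op n N f) | D. D \<in> D1p n N p}"

definition prob_spec_opt_dual :: "complex set \<Rightarrow> nat \<Rightarrow> nat \<Rightarrow> (nat \<Rightarrow> real) \<Rightarrow> (nat \<Rightarrow> complex vec) \<Rightarrow> (nat \<Rightarrow> complex vec) \<Rightarrow> bool" where
  "prob_spec_opt_dual K n N p f g \<longleftrightarrow> is_dual_frame K n N f g \<and>
     R1p n N p f g = Inf {R1p n N p f g' | g'. is_dual_frame K n N f g'}"

end

theory Submission
  imports Defs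
begin

lemma adj_dims[simp]: "dim_row (mat_adjoint A) = dim_col A" "dim_col (mat_adjoint A) = dim_row A"
  unfolding mat_adjoint_def by (auto simp: mat_of_rows_def)

lemma adj_index[simp]: "i < dim_col A \<Longrightarrow> j < dim_row A \<Longrightarrow> mat_adjoint (A :: complex mat) $$ (i,j) = cnj (A $$ (j,i))"
  unfolding mat_adjoint_def by (simp add: mat_of_rows_index)

lemma adj_carrier[simp]: "A \<in> carrier_mat n m \<Longrightarrow> mat_adjoint A \<in> carrier_mat m n"
  by (intro carrier_matI) (simp_all add: carrier_matD)

lemma adj_adj[simp]: "mat_adjoint (mat_adjoint (A :: complex mat)) = A"
  by (rule eq_matI, auto)

lemma adj_one[simp]: "mat_adjoint (1\<^sub>m n :: complex mat) = 1\<^sub>m n"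
  by (rule eq_matI, auto)

lemma sum_prod_index: "A \<in> carrier_mat n k \<Longrightarrow> B \<in> carrier_mat k m \<Longrightarrow> i < n \<Longrightarrow> j < m \<Longrightarrow>
   (A * B) $$ (i,j) = (\<Sum>l<k. A $$ (i,l) * B $$ (l,j))"
  unfolding lessThan_atLeast0 by (simp add: scalar_prod_def)

lemma adj_mult: assumes A: "(A :: complex mat) \<in> carrier_mat n k" and B: "B \<in> carrier_mat k m"
  shows "mat_adjoint (A * B) = mat_adjoint B * mat_adjoint A"
proof (rule eq_matI)
  have dA: "dim_row A = n" "dim_col A = k" and dB: "dim_row B = k" "dim_col B = m" using A B by auto
  show "dim_row (mat_adjoint (A * B)) = dim_row (mat_adjoint B * mat_adjoint A)" using dA dB by simp
  show "dim_col (mat_adjoint (A * B)) = dim_col (mat_adjoint B * mat_adjoint A)" using dA dB by simp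
  fix i j assume ij: "i < dim_row (mat_adjoint B * mat_adjoint A)" "j < dim_col (mat_adjoint B * mat_adjoint A)"
  then have i: "i < m" and j: "j < n" using dA dB by auto
  have "mat_adjoint (A * B) $$ (i,j) = cnj ((A * B) $$ (j,i))"
    using dA dB i j by simp
  also have "\<dots> = cnj (\<Sum>l<k. A $$ (j,l) * B $$ (l,i))"
    by (simp only: sum_prod_index[OF A B j i])
  also have "\<dots> = (\<Sum>l<k. cnj (B $$ (l,i)) * cnj (A $$ (j,l)))"
    by (simp add: cnj_sum mult.commute)
  also have "\<dots> = (\<Sum>l<k. mat_adjoint B $$ (i,l) * mat_adjoint A $$ (l,j))"
    using dA dB i j by (intro sum.cong refl) simp
  also have "\<dots> = (mat_adjoint B * mat_adjoint A) $$ (i,j)"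
    by (simp only: sum_prod_index[OF adj_carrier[OF B] adj_carrier[OF A] i j])
  finally show "mat_adjoint (A * B) $$ (i,j) = (mat_adjoint B * mat_adjoint A) $$ (i,j)" .
qed

lemma cinner_def: "v \<in> carrier_vec n \<Longrightarrow> (u :: complex vec) \<bullet>c v = (\<Sum>i<n. u $ i * cnj (v $ i))"
  unfolding scalar_prod_def lessThan_atLeast0 by (intro sum.cong) auto

lemma mult_mat_vec_index: "A \<in> carrier_mat n m \<Longrightarrow> x \<in> carrier_vec m \<Longrightarrow> i < n \<Longrightarrow>
   (A *\<^sub>v x) $ i = (\<Sum>j<m. A $$ (i,j) * x $ j)"
  unfolding lessThan_atLeast0 by (simp add: scalar_prod_def)

lemma inner_adj: assumes A: "(A :: complex mat) \<in> carrier_mat n m" and x: "x \<in> carrier_vec m" and y: "y \<in> carrier_vec n"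
  shows "(A *\<^sub>v x) \<bullet>c y = x \<bullet>c (mat_adjoint A *\<^sub>v y)"
proof -
  have "(A *\<^sub>v x) \<bullet>c y = (\<Sum>i<n. (A *\<^sub>v x) $ i * cnj (y $ i))"
    using y by (rule cinner_def)
  also have "\<dots> = (\<Sum>i<n. (\<Sum>j<m. A $$ (i,j) * x $ j) * cnj (y $ i))"
    by (intro sum.cong refl) (simp add: mult_mat_vec_index[OF A x])
  also have "\<dots> = (\<Sum>i<n. \<Sum>j<m. A $$ (i,j) * x $ j * cnj (y $ i))"
    by (simp add: sum_distrib_right)
  also have "\<dots> = (\<Sum>j<m. \<Sum>i<n. A $$ (i,j) * x $ j * cnj (y $ i))"
    by (rule sum.swap)
  also have "\<dots> = (\<Sum>j<m. x $ j * cnj (\<Sum>i<n. mat_adjoint A $$ (j,i) * y $ i))"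
  proof (intro sum.cong refl)
    fix j assume j: "j \<in> {..<m}"
    have "x $ j * cnj (\<Sum>i<n. mat_adjoint A $$ (j,i) * y $ i) = (\<Sum>i<n. x $ j * cnj (mat_adjoint A $$ (j,i) * y $ i))"
      by (simp add: cnj_sum sum_distrib_left del: complex_cnj_mult)
    also have "\<dots> = (\<Sum>i<n. A $$ (i,j) * x $ j * cnj (y $ i))"
      using A j by (intro sum.cong refl) auto
    finally show "(\<Sum>i<n. A $$ (i,j) * x $ j * cnj (y $ i)) = x $ j * cnj (\<Sum>i<n. mat_adjoint A $$ (j,i) * y $ i)" by simp
  qed
  also have "\<dots> = (\<Sum>j<m. x $ j * cnj ((mat_adjoint A *\<^sub>v y) $ j))"
    by (intro sum.cong refl) (simp add: mult_mat_vec_index[OF adj_carrier[OF A] y])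
  also have "\<dots> = x \<bullet>c (mat_adjoint A *\<^sub>v y)"
    by (rule cinner_def[symmetric]) (rule mult_mat_vec_carrier[OF adj_carrier[OF A] y])
  finally show ?thesis .
qed

lemma inner_sym: "u \<in> carrier_vec n \<Longrightarrow> v \<in> carrier_vec n \<Longrightarrow> cnj ((u :: complex vec) \<bullet>c v) = v \<bullet>c u"
  by (simp add: cinner_def[of _ n] cnj_sum mult.commute)

lemma inner_self_real: "(v :: complex vec) \<bullet>c v \<in> \<real>" 
  using conjugate_square_ge_0_vec[of v] by (simp add: less_eq_complex_def complex_is_Real_iff)

lemma inner_self_ge0: "0 \<le> Re ((v :: complex vec) \<bullet>c v)" 
  using conjugate_square_ge_0_vec[of v] by (simp add: less_eq_complex_def)

lemma inner_self_eq0: "v \<in> carrier_vec n \<Longrightarrow> Re ((v :: complex vec) \<bullet>c v) = 0 \<longleftrightarrow> v = 0\<^sub>v n"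
proof -
  assume v: "v \<in> carrier_vec n"
  obtain r where r: "v \<bullet>c v = complex_of_real r" using inner_self_real[of v] by (auto elim: Reals_cases)
  show ?thesis using conjugate_square_eq_0_vec[OF v] r by auto
qed

definition unitary :: "nat \<Rightarrow> complex mat \<Rightarrow> bool" where
  "unitary n U \<longleftrightarrow> U \<in> carrier_mat n n \<and> mat_adjoint U * U = 1\<^sub>m n \<and> U * mat_adjoint U = 1\<^sub>m n"

lemma inner_self_ofreal: "(x :: complex vec) \<bullet>c x = complex_of_real (Re (x \<bullet>c x))"
  using inner_self_real[of x] by (metis Re_complex_of_real Reals_cases)

lemma unitary_with_col:
  assumes v: "v \<in> carrier_vec n" and v0: "v \<noteq> 0\<^sub>v n"
  shows "\<exists>W c. unitary n W \<and> (\<forall>i<n. W $$ (i,0) = c * v $ i)"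
proof -
  interpret cof_vec_space n "TYPE(complex)" .
  define b where "b = basis_completion v"
  from basis_completion[OF v v0, folded b_def]
  have dist_b: "distinct b" and indep: "\<not> lin_dep (set b)" and b: "set b \<subseteq> carrier_vec n" and hdb: "hd b = v" 
    and len_b: "length b = n" by auto
  have n: "n > 0" using v v0 by (cases n) auto
  from hdb len_b n obtain vs where bv: "b = v # vs" by (cases b, auto)
  define ws where "ws = gram_schmidt n b"
  from gram_schmidt_result[OF b dist_b indep ws_def]
  have ws: "set ws \<subseteq> carrier_vec n" "corthogonal ws" "length ws = n" by (auto simp: len_b)
  have hdws: "hd ws = v" unfolding ws_def bv using gram_schmidt_hd[OF v, of vs] .
  have ws0: "ws ! 0 = v" using hdws ws(3) n by (cases ws) auto
  have wsc: "\<And>j. j < n \<Longrightarrow> ws ! j \<in> carrier_vec n" using ws by auto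
  define s where "s j = sqrt (Re (ws ! j \<bullet>c ws ! j))" for j
  have pos: "Re (ws ! j \<bullet>c ws ! j) > 0" if j: "j < n" for j
  proof -
    have "ws ! j \<bullet>c ws ! j \<noteq> 0" using corthogonalD[OF ws(2), of j j] j ws(3) by auto
    then have "Re (ws ! j \<bullet>c ws ! j) \<noteq> 0" using inner_self_ofreal[of "ws ! j"] by auto
    then show ?thesis using inner_self_ge0[of "ws ! j"] by auto
  qed
  have s: "s j > 0" "complex_of_real (s j) * complex_of_real (s j) = ws ! j \<bullet>c ws ! j" if "j < n" for j
    using pos[OF that] inner_self_ofreal[of "ws ! j"] unfolding s_def
    by (auto simp flip: of_real_mult)
  define W where "W = mat n n (\<lambda>(i,j). ws ! j $ i / complex_of_real (s j))"
  have W: "W \<in> carrier_mat n n" unfolding W_def by auto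
  have WW: "mat_adjoint W * W = 1\<^sub>m n"
  proof (rule eq_matI)
    fix i j assume "i < dim_row (1\<^sub>m n :: complex mat)" "j < dim_col (1\<^sub>m n :: complex mat)"
    then have i: "i < n" and j: "j < n" by auto
    have "(mat_adjoint W * W) $$ (i,j) = (\<Sum>k<n. mat_adjoint W $$ (i,k) * W $$ (k,j))"
      by (rule sum_prod_index[OF adj_carrier[OF W] W i j])
    also have "\<dots> = (\<Sum>k<n. (ws ! j $ k * cnj (ws ! i $ k)) / (complex_of_real (s i) * complex_of_real (s j)))"
      using i j W by (intro sum.cong refl) (auto simp: W_def)
    also have "\<dots> = (ws ! j \<bullet>c ws ! i) / (complex_of_real (s i) * complex_of_real (s j))"
      by (simp add: cinner_def[OF wsc[OF i]] sum_divide_distrib)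
    also have "\<dots> = 1\<^sub>m n $$ (i,j)"
    proof (cases "i = j")
      case True
      then show ?thesis using s[OF i] i by auto
    next
      case False
      then have "ws ! j \<bullet>c ws ! i = 0" using corthogonalD[OF ws(2), of j i] i j ws(3) by auto
      then show ?thesis using False i j by auto
    qed
    finally show "(mat_adjoint W * W) $$ (i,j) = 1\<^sub>m n $$ (i,j)" .
  qed (use W in auto)
  have WW2: "W * mat_adjoint W = 1\<^sub>m n"
    by (rule mat_mult_left_right_inverse[OF adj_carrier[OF W] W WW])
  have "\<forall>i<n. W $$ (i,0) = (1 / complex_of_real (s 0)) * v $ i"
    using n ws0 by (auto simp: W_def)
  then show ?thesis using W WW WW2 unfolding unitary_def by blast
qed

definition blk :: "nat \<Rightarrow> complex \<Rightarrow> complex mat \<Rightarrow> complex mat" where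
  "blk m a X = mat (Suc m) (Suc m) (\<lambda>(i,j). if i = 0 \<and> j = 0 then a else if i = 0 \<or> j = 0 then 0 else X $$ (i - 1, j - 1))"

definition diagm :: "nat \<Rightarrow> (nat \<Rightarrow> complex) \<Rightarrow> complex mat" where
  "diagm n d = mat n n (\<lambda>(i,j). if i = j then d i else 0)"

lemma blk_carrier[simp]: "blk m a X \<in> carrier_mat (Suc m) (Suc m)"
  unfolding blk_def by auto

lemma diagm_carrier[simp]: "diagm n d \<in> carrier_mat n n"
  unfolding diagm_def by auto

lemma blk_mult: assumes X: "X \<in> carrier_mat m m" and Y: "Y \<in> carrier_mat m m"
  shows "blk m a X * blk m b Y = blk m (a * b) (X * Y)"
proof (rule eq_matI)
  fix i j assume "i < dim_row (blk m (a * b) (X * Y))" "j < dim_col (blk m (a * b) (X * Y))"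
  then have i: "i < Suc m" and j: "j < Suc m" by (auto simp: blk_def)
  have "(blk m a X * blk m b Y) $$ (i,j) = (\<Sum>l<Suc m. blk m a X $$ (i,l) * blk m b Y $$ (l,j))"
    by (rule sum_prod_index[OF blk_carrier blk_carrier i j])
  also have "\<dots> = blk m a X $$ (i,0) * blk m b Y $$ (0,j) + (\<Sum>l<m. blk m a X $$ (i,Suc l) * blk m b Y $$ (Suc l,j))"
    by (rule sum.lessThan_Suc_shift)
  also have "\<dots> = blk m (a * b) (X * Y) $$ (i,j)"
  proof (cases i)
    case 0
    then show ?thesis using j by (cases j) (auto simp: blk_def)
  next
    case (Suc i')
    show ?thesis
    proof (cases j)
      case 0
      then show ?thesis using i Suc by (auto simp: blk_def)
    next
      case (Suc j')
      have "(\<Sum>l<m. blk m a X $$ (i,Suc l) * blk m b Y $$ (Suc l,j)) = (\<Sum>l<m. X $$ (i',l) * Y $$ (l,j'))"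
        using i j \<open>i = Suc i'\<close> Suc by (intro sum.cong refl) (auto simp: blk_def)
      also have "\<dots> = (X * Y) $$ (i', j')"
        using i j \<open>i = Suc i'\<close> Suc by (intro sum_prod_index[OF X Y, symmetric]) auto
      finally show ?thesis using i j \<open>i = Suc i'\<close> Suc by (auto simp: blk_def)
    qed
  qed
  finally show "(blk m a X * blk m b Y) $$ (i,j) = blk m (a * b) (X * Y) $$ (i,j)" .
qed (auto simp: blk_def)

lemma blk_adj: assumes X: "X \<in> carrier_mat m m"
  shows "mat_adjoint (blk m a X) = blk m (cnj a) (mat_adjoint X)"
  by (rule eq_matI) (use X in \<open>auto simp: blk_def\<close>)

lemma blk_one: "blk m 1 (1\<^sub>m m) = 1\<^sub>m (Suc m)"
  by (rule eq_matI) (auto simp: blk_def)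

lemma diagm_blk: "diagm (Suc m) d = blk m (d 0) (diagm m (\<lambda>i. d (Suc i)))"
  by (rule eq_matI) (auto simp: blk_def diagm_def)

lemma unitary_carrier: "unitary n U \<Longrightarrow> U \<in> carrier_mat n n"
  unfolding unitary_def by auto

lemma unitary_mult: assumes U: "unitary n U" and V: "unitary n V"
  shows "unitary n (U * V)"
proof -
  have Uc: "U \<in> carrier_mat n n" and Vc: "V \<in> carrier_mat n n" using U V unfolding unitary_def by auto
  have adj: "mat_adjoint (U * V) = mat_adjoint V * mat_adjoint U" by (rule adj_mult[OF Uc Vc])
  have aU: "mat_adjoint U \<in> carrier_mat n n" and aV: "mat_adjoint V \<in> carrier_mat n n" using Uc Vc by auto
  have e1: "mat_adjoint U * (U * V) = V"
    using assoc_mult_mat[OF aU Uc Vc] U Vc unfolding unitary_def by simp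
  have "mat_adjoint V * mat_adjoint U * (U * V) = mat_adjoint V * (mat_adjoint U * (U * V))"
    by (rule assoc_mult_mat[OF aV aU mult_carrier_mat[OF Uc Vc]])
  also have "\<dots> = 1\<^sub>m n" using e1 V unfolding unitary_def by simp
  finally have 1: "mat_adjoint (U * V) * (U * V) = 1\<^sub>m n" unfolding adj .
  have e2: "V * (mat_adjoint V * mat_adjoint U) = mat_adjoint U"
    using assoc_mult_mat[OF Vc aV aU] V left_mult_one_mat[OF aU] unfolding unitary_def by simp
  have "U * V * (mat_adjoint V * mat_adjoint U) = U * (V * (mat_adjoint V * mat_adjoint U))"
    by (rule assoc_mult_mat[OF Uc Vc mult_carrier_mat[OF aV aU]])
  also have "\<dots> = 1\<^sub>m n" using e2 U unfolding unitary_def by simp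
  finally have 2: "(U * V) * mat_adjoint (U * V) = 1\<^sub>m n" unfolding adj .
  show ?thesis using 1 2 Uc Vc unfolding unitary_def by auto
qed

lemma unitary_blk: assumes U: "unitary m U" shows "unitary (Suc m) (blk m 1 U)"
proof -
  have Uc: "U \<in> carrier_mat m m" using U unfolding unitary_def by auto
  show ?thesis unfolding unitary_def blk_adj[OF Uc]
    using U Uc by (auto simp: blk_mult unitary_def blk_one)
qed

lemma unitary_conj: assumes U: "unitary n U" and X: "X \<in> carrier_mat n n"
  shows "U * (mat_adjoint U * X * U) * mat_adjoint U = X"
proof -
  have Uc: "U \<in> carrier_mat n n" using U unfolding unitary_def by auto
  have aU: "mat_adjoint U \<in> carrier_mat n n" using Uc by auto
  have e1: "mat_adjoint U * X * U = mat_adjoint U * (X * U)" by (rule assoc_mult_mat[OF aU X Uc])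
  have e2: "U * (mat_adjoint U * (X * U)) = X * U"
    using assoc_mult_mat[OF Uc aU mult_carrier_mat[OF X Uc], symmetric] U X Uc unfolding unitary_def by simp
  have e3: "X * U * mat_adjoint U = X"
    using assoc_mult_mat[OF X Uc aU] U X unfolding unitary_def by simp
  show ?thesis unfolding e1 e2 e3 ..
qed

lemma mult_nn: "X \<in> carrier_mat n n \<Longrightarrow> Y \<in> carrier_mat n n \<Longrightarrow> X * Y \<in> carrier_mat n n"
  by (rule mult_carrier_mat)

lemma assoc_nn: "X \<in> carrier_mat n n \<Longrightarrow> Y \<in> carrier_mat n n \<Longrightarrow> Z \<in> carrier_mat n n \<Longrightarrow> X * Y * Z = X * (Y * Z)"
  by (rule assoc_mult_mat)

theorem spectral:
  assumes "A \<in> carrier_mat n n" and "mat_adjoint A = A"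
  shows "\<exists>U d. unitary n U \<and> A = U * diagm n d * mat_adjoint U"
  using assms
proof (induction n arbitrary: A)
  case 0
  have "A = 1\<^sub>m 0 * diagm 0 (\<lambda>_. 0) * mat_adjoint (1\<^sub>m 0)"
    using 0 by (intro eq_matI) auto
  moreover have "unitary 0 (1\<^sub>m 0)" unfolding unitary_def by auto
  ultimately show ?case by blast
next
  case (Suc m)
  note A = Suc.prems(1) and herm = Suc.prems(2)
  from spectrum_non_empty[OF A] obtain e where "eigenvalue A e" unfolding spectrum_def by auto
  then obtain v where v: "v \<in> carrier_vec (Suc m)" "v \<noteq> 0\<^sub>v (Suc m)" and Av: "A *\<^sub>v v = e \<cdot>\<^sub>v v"
    unfolding eigenvalue_def eigenvector_def using A by auto
  from unitary_with_col[OF v] obtain W c where W: "unitary (Suc m) W" and Wc: "\<forall>i<Suc m. W $$ (i,0) = c * v $ i"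
    by blast
  have Wm: "W \<in> carrier_mat (Suc m) (Suc m)" using W unfolding unitary_def by auto
  define A' where "A' = mat_adjoint W * A * W"
  have A'c: "A' \<in> carrier_mat (Suc m) (Suc m)" unfolding A'_def using Wm A by auto
  have A'h: "mat_adjoint A' = A'"
    unfolding A'_def using Wm A herm
    by (simp add: adj_mult[of _ "Suc m" "Suc m" _ "Suc m"] assoc_mult_mat[of _ "Suc m" "Suc m" _ "Suc m" _ "Suc m"])
  have AW: "(A * W) $$ (k,0) = e * W $$ (k,0)" if k: "k < Suc m" for k
  proof -
    have "(A * W) $$ (k,0) = (\<Sum>l<Suc m. A $$ (k,l) * W $$ (l,0))"
      by (rule sum_prod_index[OF A Wm k]) simp
    also have "\<dots> = (\<Sum>l<Suc m. c * (A $$ (k,l) * v $ l))"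
      using Wc by (intro sum.cong refl) simp
    also have "\<dots> = c * (\<Sum>l<Suc m. A $$ (k,l) * v $ l)"
      by (rule sum_distrib_left[symmetric])
    also have "\<dots> = c * (A *\<^sub>v v) $ k"
      using mult_mat_vec_index[OF A v(1) k] by simp
    also have "\<dots> = e * W $$ (k,0)" using Av k v Wc by simp
    finally show ?thesis .
  qed
  have col0: "A' $$ (i,0) = (if i = 0 then e else 0)" if i: "i < Suc m" for i
  proof -
    have "A' = mat_adjoint W * (A * W)" unfolding A'_def using Wm A by (simp add: assoc_mult_mat[of _ "Suc m" "Suc m" _ "Suc m" _ "Suc m"])
    then have "A' $$ (i,0) = (\<Sum>k<Suc m. mat_adjoint W $$ (i,k) * (A * W) $$ (k,0))"
      using sum_prod_index[OF adj_carrier[OF Wm] mult_carrier_mat[OF A Wm] i] by simp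
    also have "\<dots> = (\<Sum>k<Suc m. e * (mat_adjoint W $$ (i,k) * W $$ (k,0)))"
      by (intro sum.cong refl) (simp add: AW)
    also have "\<dots> = e * (\<Sum>k<Suc m. mat_adjoint W $$ (i,k) * W $$ (k,0))"
      by (rule sum_distrib_left[symmetric])
    also have "\<dots> = e * (mat_adjoint W * W) $$ (i,0)"
      using sum_prod_index[OF adj_carrier[OF Wm] Wm i] by simp
    also have "\<dots> = (if i = 0 then e else 0)" using W i unfolding unitary_def by simp
    finally show ?thesis .
  qed
  have row0: "A' $$ (0,j) = (if j = 0 then e else 0)" if j: "j < Suc m" for j
  proof -
    have "A' $$ (0,j) = mat_adjoint A' $$ (0,j)" using A'h by simp
    also have "\<dots> = cnj (A' $$ (j,0))" using A'c j by simp
    finally show ?thesis using col0[OF j] col0[of 0] by auto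
  qed
  define A3 where "A3 = mat m m (\<lambda>(i,j). A' $$ (Suc i, Suc j))"
  have A3c: "A3 \<in> carrier_mat m m" unfolding A3_def by auto
  have A3h: "mat_adjoint A3 = A3"
  proof (rule eq_matI)
    fix i j assume "i < dim_row A3" "j < dim_col A3"
    then have i: "i < m" and j: "j < m" unfolding A3_def by auto
    have "mat_adjoint A3 $$ (i,j) = cnj (A' $$ (Suc j, Suc i))" using i j unfolding A3_def by simp
    also have "\<dots> = mat_adjoint A' $$ (Suc i, Suc j)" using i j A'c by simp
    finally show "mat_adjoint A3 $$ (i,j) = A3 $$ (i,j)" using A'h i j unfolding A3_def by simp
  qed (auto simp: A3_def)
  have A'blk: "A' = blk m e A3"
  proof (rule eq_matI)
    fix i j assume "i < dim_row (blk m e A3)" "j < dim_col (blk m e A3)"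
    then have i: "i < Suc m" and j: "j < Suc m" by (auto simp: blk_def)
    show "A' $$ (i,j) = blk m e A3 $$ (i,j)"
    proof (cases "i = 0 \<or> j = 0")
      case True
      then show ?thesis using col0[OF i] row0[OF j] i j by (auto simp: blk_def)
    next
      case False
      then show ?thesis using i j by (auto simp: blk_def A3_def)
    qed
  qed (use A'c in \<open>auto simp: blk_def\<close>)
  from Suc.IH[OF A3c A3h] obtain U3 d3 where U3: "unitary m U3" and A3eq: "A3 = U3 * diagm m d3 * mat_adjoint U3"
    by blast
  have U3c: "U3 \<in> carrier_mat m m" using U3 unfolding unitary_def by auto
  define d where "d i = (if i = 0 then e else d3 (i - 1))" for i
  have D: "diagm (Suc m) d = blk m e (diagm m d3)"
    unfolding diagm_blk d_def by simp
  define B where "B = blk m 1 U3"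
  have Bu: "unitary (Suc m) B" unfolding B_def by (rule unitary_blk[OF U3])
  have Bc: "B \<in> carrier_mat (Suc m) (Suc m)" unfolding B_def by simp
  have "A' = B * diagm (Suc m) d * mat_adjoint B"
    unfolding A'blk D B_def blk_adj[OF U3c] A3eq
    using U3c by (simp add: blk_mult)
  then have "A = W * (B * diagm (Suc m) d * mat_adjoint B) * mat_adjoint W"
    using unitary_conj[OF W A] unfolding A'_def by simp
  also have "\<dots> = (W * B) * diagm (Suc m) d * mat_adjoint (W * B)"
    using Wm Bc adj_carrier[OF Wm] adj_carrier[OF Bc] diagm_carrier[of "Suc m" d]
    by (simp add: adj_mult[OF Wm Bc] assoc_nn[of _ "Suc m"] mult_nn[of _ "Suc m"])
  finally show ?case using unitary_mult[OF W Bu] by blast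
qed

definition psd :: "nat \<Rightarrow> complex mat \<Rightarrow> bool" where
  "psd n R \<longleftrightarrow> (\<forall>v\<in>carrier_vec n. 0 \<le> Re ((R *\<^sub>v v) \<bullet>c v))"

lemma cinner_add_left: "x \<in> carrier_vec n \<Longrightarrow> y \<in> carrier_vec n \<Longrightarrow> z \<in> carrier_vec n \<Longrightarrow>
   (x + y) \<bullet>c z = x \<bullet>c z + (y :: complex vec) \<bullet>c z"
  by (simp add: cinner_def[of z n] sum.distrib distrib_right)

lemma cinner_add_right: "x \<in> carrier_vec n \<Longrightarrow> y \<in> carrier_vec n \<Longrightarrow> z \<in> carrier_vec n \<Longrightarrow>
   x \<bullet>c (y + z) = x \<bullet>c y + (x :: complex vec) \<bullet>c z"
  by (simp add: cinner_def[of _ n] sum.distrib distrib_left)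

lemma cinner_smult_left: "x \<in> carrier_vec n \<Longrightarrow> y \<in> carrier_vec n \<Longrightarrow>
   (a \<cdot>\<^sub>v x) \<bullet>c y = a * ((x :: complex vec) \<bullet>c y)"
  by (simp add: cinner_def[of y n] sum_distrib_left mult_ac)

lemma cinner_smult_right: "x \<in> carrier_vec n \<Longrightarrow> y \<in> carrier_vec n \<Longrightarrow>
   x \<bullet>c (a \<cdot>\<^sub>v y) = cnj a * ((x :: complex vec) \<bullet>c y)"
  by (simp add: cinner_def[of _ n] sum_distrib_left mult_ac)

lemma inner_adj2: assumes A: "(A :: complex mat) \<in> carrier_mat n m" and x: "x \<in> carrier_vec n" and y: "y \<in> carrier_vec m"
  shows "x \<bullet>c (A *\<^sub>v y) = (mat_adjoint A *\<^sub>v x) \<bullet>c y"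
  using inner_adj[OF adj_carrier[OF A] x y] by simp

lemma herm_inner: assumes A: "(A :: complex mat) \<in> carrier_mat n n" and h: "mat_adjoint A = A"
  and x: "x \<in> carrier_vec n" and y: "y \<in> carrier_vec n"
  shows "(A *\<^sub>v x) \<bullet>c y = x \<bullet>c (A *\<^sub>v y)"
  using inner_adj[OF A x y] h by simp

lemma psd_zero: assumes R: "R \<in> carrier_mat n n" and h: "mat_adjoint R = R" and p: "psd n R"
  and x: "x \<in> carrier_vec n" and z: "Re ((R *\<^sub>v x) \<bullet>c x) = 0"
  shows "R *\<^sub>v x = 0\<^sub>v n"
proof -
  define y where "y = R *\<^sub>v x"
  have y: "y \<in> carrier_vec n" unfolding y_def using R x by auto
  define a where "a = Re ((R *\<^sub>v y) \<bullet>c y)"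
  define b where "b = Re ((R *\<^sub>v x) \<bullet>c y)"
  have a: "a \<ge> 0" using p y unfolding a_def psd_def by auto
  have key: "0 \<le> 2 * t * b + t * t * a" for t :: real
  proof -
    let ?t = "complex_of_real t"
    have w: "x + ?t \<cdot>\<^sub>v y \<in> carrier_vec n" using x y by auto
    have Rw: "R *\<^sub>v (x + ?t \<cdot>\<^sub>v y) = R *\<^sub>v x + ?t \<cdot>\<^sub>v (R *\<^sub>v y)"
      using R x y by (simp add: mult_add_distrib_mat_vec[OF R] mult_mat_vec[OF R])
    have Rx: "R *\<^sub>v x \<in> carrier_vec n" and Ry: "R *\<^sub>v y \<in> carrier_vec n" using R x y by auto
    have "(R *\<^sub>v (x + ?t \<cdot>\<^sub>v y)) \<bullet>c (x + ?t \<cdot>\<^sub>v y) =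
      (R *\<^sub>v x) \<bullet>c x + ?t * ((R *\<^sub>v x) \<bullet>c y) + ?t * ((R *\<^sub>v y) \<bullet>c x) + ?t * ?t * ((R *\<^sub>v y) \<bullet>c y)"
      unfolding Rw using x y Rx Ry
      by (simp add: cinner_add_left[of _ n] cinner_add_right[of _ n] cinner_smult_left[of _ n] cinner_smult_right[of _ n] algebra_simps)
    moreover have "(R *\<^sub>v y) \<bullet>c x = cnj ((R *\<^sub>v x) \<bullet>c y)"
      using herm_inner[OF R h y x] inner_sym[OF Rx y] by simp
    ultimately have "Re ((R *\<^sub>v (x + ?t \<cdot>\<^sub>v y)) \<bullet>c (x + ?t \<cdot>\<^sub>v y)) = 2 * t * b + t * t * a"
      using z unfolding a_def b_def by simp
    then show ?thesis using p w unfolding psd_def by metis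
  qed
  have bb: "b = Re (y \<bullet>c y)" unfolding b_def y_def ..
  have b0: "b \<ge> 0" unfolding bb by (rule inner_self_ge0)
  have "b = 0"
  proof (rule ccontr)
    assume "b \<noteq> 0"
    then have bp: "b > 0" using b0 by auto
    define t where "t = - b / (a + 1)"
    have "0 \<le> 2 * t * b + t * t * a" by (rule key)
    also have "2 * t * b + t * t * a = b * b * (- a - 2) / ((a + 1) * (a + 1))"
    proof -
      have s: "a + 1 \<noteq> 0" using a by auto
      show ?thesis unfolding t_def using s by (simp add: divide_simps) (simp add: algebra_simps)
    qed
    also have "\<dots> < 0" using bp a by (intro divide_neg_pos) (auto intro: mult_pos_neg)
    finally show False by simp
  qed
  then show ?thesis using inner_self_eq0[OF y] unfolding bb y_def by simp
qed

lemma conj_unit: "conjugate (unit_vec n i :: complex vec) = unit_vec n i"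
  by (rule eq_vecI) (auto simp: unit_vec_def)

lemma mat_vec_zero: "(A :: complex mat) \<in> carrier_mat n m \<Longrightarrow> A *\<^sub>v 0\<^sub>v m = 0\<^sub>v n"
  by (rule eq_vecI) (auto simp: mult_mat_vec_index)

lemma unit_inner: assumes X: "(X :: complex mat) \<in> carrier_mat n n" and i: "i < n"
  shows "(X *\<^sub>v unit_vec n i) \<bullet>c unit_vec n i = X $$ (i,i)"
  using X i by (simp add: conj_unit)

lemma diag_mult_vec: assumes w: "w \<in> carrier_vec n" and k: "k < n"
  shows "(diagm n d *\<^sub>v w) $ k = d k * w $ k"
proof -
  have "row (diagm n d) k = d k \<cdot>\<^sub>v unit_vec n k"
    using k by (intro eq_vecI) (auto simp: diagm_def)
  then show ?thesis using w k by (simp add: diagm_def)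
qed

lemma diag_inner: assumes w: "w \<in> carrier_vec n"
  shows "(diagm n d *\<^sub>v w) \<bullet>c w = (\<Sum>k<n. d k * (w $ k * cnj (w $ k)))"
  unfolding cinner_def[OF w] using w by (intro sum.cong refl) (simp add: diag_mult_vec)

lemma unitary_adj: "unitary n U \<Longrightarrow> unitary n (mat_adjoint U)"
  unfolding unitary_def by auto

lemma unitary_cancel: assumes U: "unitary n U" and X: "X \<in> carrier_mat n k"
  shows "mat_adjoint U * (U * X) = X"
proof -
  have Uc: "U \<in> carrier_mat n n" using U unfolding unitary_def by auto
  show ?thesis using assoc_mult_mat[OF adj_carrier[OF Uc] Uc X, symmetric] U X unfolding unitary_def by simp
qed

lemma unitary_cancel': assumes U: "unitary n U" and X: "X \<in> carrier_mat n k"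
  shows "U * (mat_adjoint U * X) = X"
  using unitary_cancel[OF unitary_adj[OF U] X] by simp

lemma diag_mult: "diagm n a * diagm n b = diagm n (\<lambda>i. a i * b i)"
proof (rule eq_matI)
  fix i j assume "i < dim_row (diagm n (\<lambda>i. a i * b i))" "j < dim_col (diagm n (\<lambda>i. a i * b i))"
  then have i: "i < n" and j: "j < n" by (auto simp: diagm_def)
  have "(diagm n a * diagm n b) $$ (i,j) = (\<Sum>l<n. diagm n a $$ (i,l) * diagm n b $$ (l,j))"
    by (rule sum_prod_index[OF diagm_carrier diagm_carrier i j])
  also have "\<dots> = (\<Sum>l<n. if l = i then (if i = j then a i * b i else 0) else 0)"
    using i j by (intro sum.cong refl) (auto simp: diagm_def)
  also have "\<dots> = diagm n (\<lambda>i. a i * b i) $$ (i,j)" using i j by (simp add: diagm_def)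
  finally show "(diagm n a * diagm n b) $$ (i,j) = diagm n (\<lambda>i. a i * b i) $$ (i,j)" .
qed (auto simp: diagm_def)

lemma diag_adj: "mat_adjoint (diagm n d) = diagm n (\<lambda>i. cnj (d i))"
  by (rule eq_matI) (auto simp: diagm_def)

theorem sqrt_exists:
  assumes A: "A \<in> carrier_mat n n" and h: "mat_adjoint A = A"
    and pd: "\<forall>v\<in>carrier_vec n. v \<noteq> 0\<^sub>v n \<longrightarrow> 0 < Re ((A *\<^sub>v v) \<bullet>c v)"
  shows "\<exists>R. R \<in> carrier_mat n n \<and> mat_adjoint R = R \<and> psd n R \<and> R * R = A"
proof -
  obtain U d where U: "unitary n U" and Aeq: "A = U * diagm n d * mat_adjoint U"
    using spectral[OF A h] by blast
  have Uc: "U \<in> carrier_mat n n" and aU: "mat_adjoint U \<in> carrier_mat n n" using U unfolding unitary_def by auto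
  have Dc: "diagm n d \<in> carrier_mat n n" by simp
  have Deq: "diagm n d = mat_adjoint U * A * U"
    using unitary_conj[OF unitary_adj[OF U] Dc] unfolding Aeq by simp
  have dpos: "Re (d i) > 0" and dreal: "d i = complex_of_real (Re (d i))" if i: "i < n" for i
  proof -
    let ?e = "unit_vec n i"
    let ?u = "U *\<^sub>v ?e"
    have u: "?u \<in> carrier_vec n" using Uc by auto
    have "d i = diagm n d $$ (i,i)" using i by (simp add: diagm_def)
    also have "\<dots> = (diagm n d *\<^sub>v ?e) \<bullet>c ?e" using unit_inner[OF Dc i] by simp
    also have "diagm n d *\<^sub>v ?e = mat_adjoint U *\<^sub>v (A *\<^sub>v ?u)"
      unfolding Deq using assoc_mult_mat_vec[OF mult_nn[OF aU A] Uc unit_vec_carrier[of n i]]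
        assoc_mult_mat_vec[OF aU A u] by simp
    also have "(mat_adjoint U *\<^sub>v (A *\<^sub>v ?u)) \<bullet>c ?e = (A *\<^sub>v ?u) \<bullet>c ?u"
      using inner_adj[OF aU, of "A *\<^sub>v ?u" ?e] A Uc by simp
    finally have di: "d i = (A *\<^sub>v ?u) \<bullet>c ?u" .
    have "mat_adjoint U *\<^sub>v ?u = ?e"
      using U Uc by (simp add: assoc_mult_mat_vec[of _ n n _ n, symmetric] unitary_def)
    then have "?u \<noteq> 0\<^sub>v n"
    proof (intro notI)
      assume a1: "mat_adjoint U *\<^sub>v ?u = ?e" and a2: "?u = 0\<^sub>v n"
      have "?e = mat_adjoint U *\<^sub>v ?u" using a1 by simp
      also have "\<dots> = mat_adjoint U *\<^sub>v 0\<^sub>v n" by (simp only: a2)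
      also have "\<dots> = 0\<^sub>v n" by (rule mat_vec_zero[OF aU])
      finally show False using unit_vec_nonzero[OF i] by blast
    qed
    then show "Re (d i) > 0" using pd u di by auto
    have "mat_adjoint (diagm n d) = diagm n d" unfolding Deq using Uc aU A h
      by (simp add: adj_mult[of _ n n _ n] mult_nn[of _ n] assoc_nn[of _ n])
    then have "mat_adjoint (diagm n d) $$ (i,i) = diagm n d $$ (i,i)" by simp
    then have "cnj (d i) = d i" using i by (simp add: diagm_def)
    then show "d i = complex_of_real (Re (d i))" by (simp add: complex_eq_iff)
  qed
  define r where "r i = sqrt (Re (d i))" for i
  define E where "E = diagm n (\<lambda>i. complex_of_real (r i))"
  have Ec: "E \<in> carrier_mat n n" unfolding E_def by simp
  have Eh: "mat_adjoint E = E" unfolding E_def diag_adj by simp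
  have EE: "E * E = diagm n d"
  proof -
    have "E * E = diagm n (\<lambda>i. complex_of_real (r i) * complex_of_real (r i))"
      unfolding E_def diag_mult ..
    also have "\<dots> = diagm n d"
    proof (rule eq_matI)
      fix i j assume "i < dim_row (diagm n d)" "j < dim_col (diagm n d)"
      then have i: "i < n" and j: "j < n" by (auto simp: diagm_def)
      have rr: "r i * r i = Re (d i)" using dpos[OF i] unfolding r_def by simp
      have "complex_of_real (r i) * complex_of_real (r i) = d i"
        using dreal[OF i] by (simp flip: of_real_mult add: rr)
      then show "diagm n (\<lambda>i. complex_of_real (r i) * complex_of_real (r i)) $$ (i,j) = diagm n d $$ (i,j)"
        using i j by (cases "i = j") (auto simp: diagm_def)
    qed (auto simp: diagm_def)
    finally show ?thesis .
  qed
  define R where "R = U * E * mat_adjoint U"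
  have Rc: "R \<in> carrier_mat n n" unfolding R_def using Uc Ec by auto
  have Rh: "mat_adjoint R = R" unfolding R_def
    using Uc aU Ec Eh by (simp add: adj_mult[of _ n n _ n] mult_nn[of _ n] assoc_nn[of _ n])
  have RR: "R * R = A"
  proof -
    have "R * R = U * (E * (mat_adjoint U * (U * (E * mat_adjoint U))))"
      unfolding R_def using Uc aU Ec by (simp add: mult_nn[of _ n] assoc_nn[of _ n])
    also have "\<dots> = U * (E * E * mat_adjoint U)"
      using unitary_cancel[OF U mult_nn[OF Ec aU]] Ec aU by (simp add: assoc_nn[of _ n])
    also have "\<dots> = A" unfolding EE Aeq using Uc aU by (simp add: mult_nn[of _ n] assoc_nn[of _ n])
    finally show ?thesis .
  qed
  have Rp: "psd n R" unfolding psd_def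
  proof
    fix v :: "complex vec" assume v: "v \<in> carrier_vec n"
    define w where "w = mat_adjoint U *\<^sub>v v"
    have w: "w \<in> carrier_vec n" unfolding w_def using aU v by auto
    have "R *\<^sub>v v = U *\<^sub>v (E *\<^sub>v w)" unfolding R_def
      using assoc_mult_mat_vec[OF mult_nn[OF Uc Ec] aU v] assoc_mult_mat_vec[OF Uc Ec w] unfolding w_def by simp
    then have "(R *\<^sub>v v) \<bullet>c v = (E *\<^sub>v w) \<bullet>c w"
      using inner_adj[OF Uc, of "E *\<^sub>v w" v] Ec w v unfolding w_def by simp
    also have "\<dots> = (\<Sum>k<n. complex_of_real (r k) * (w $ k * cnj (w $ k)))"
      unfolding E_def by (rule diag_inner[OF w])
    finally have "Re ((R *\<^sub>v v) \<bullet>c v) = (\<Sum>k<n. r k * ((Re (w $ k))\<^sup>2 + (Im (w $ k))\<^sup>2))"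
      by (simp add: complex_mult_cnj Re_sum del: of_real_add)
    also have "\<dots> \<ge> 0" unfolding r_def by (intro sum_nonneg mult_nonneg_nonneg) (auto simp: less_imp_le[OF dpos])
    finally show "0 \<le> Re ((R *\<^sub>v v) \<bullet>c v)" .
  qed
  show ?thesis using Rc Rh Rp RR by blast
qed

lemma sum3_rot: "(\<Sum>l<n. \<Sum>k<n. \<Sum>j<n. (H l k j :: complex)) = (\<Sum>k<n. \<Sum>j<n. \<Sum>l<n. H l k j)"
proof -
  have "(\<Sum>l<n. \<Sum>k<n. \<Sum>j<n. H l k j) = (\<Sum>k<n. \<Sum>l<n. \<Sum>j<n. H l k j)" by (rule sum.swap)
  also have "\<dots> = (\<Sum>k<n. \<Sum>j<n. \<Sum>l<n. H l k j)" by (rule sum.cong[OF refl], rule sum.swap)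
  finally show ?thesis .
qed

theorem sqrt_unique:
  assumes R: "R \<in> carrier_mat n n" and Rh: "mat_adjoint R = R" and Rp: "psd n R" and RR: "R * R = A"
    and T: "T \<in> carrier_mat n n" and Th: "mat_adjoint T = T" and Tp: "psd n T" and TT: "T * T = A"
    and inj: "\<forall>v\<in>carrier_vec n. A *\<^sub>v v = 0\<^sub>v n \<longrightarrow> v = 0\<^sub>v n"
  shows "R = T"
proof -
  define D where "D = mat n n (\<lambda>(i,j). R $$ (i,j) - T $$ (i,j))"
  have Dc: "D \<in> carrier_mat n n" unfolding D_def by auto
  have Dh: "cnj (D $$ (k,l)) = D $$ (l,k)" if "k < n" "l < n" for k l
  proof -
    have "cnj (R $$ (k,l)) = R $$ (l,k)" using arg_cong[OF Rh, of "\<lambda>M. M $$ (l,k)"] R that by simp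
    moreover have "cnj (T $$ (k,l)) = T $$ (l,k)" using arg_cong[OF Th, of "\<lambda>M. M $$ (l,k)"] T that by simp
    ultimately show ?thesis using that unfolding D_def by simp
  qed
  have RDT: "(\<Sum>j<n. R $$ (k,j) * D $$ (j,l)) = - (\<Sum>j<n. D $$ (k,j) * T $$ (j,l))" if k: "k < n" and l: "l < n" for k l
  proof -
    have "(\<Sum>j<n. R $$ (k,j) * D $$ (j,l)) + (\<Sum>j<n. D $$ (k,j) * T $$ (j,l))
      = (\<Sum>j<n. R $$ (k,j) * D $$ (j,l) + D $$ (k,j) * T $$ (j,l))"
      by (rule sum.distrib[symmetric])
    also have "\<dots> = (\<Sum>j<n. R $$ (k,j) * R $$ (j,l) - T $$ (k,j) * T $$ (j,l))"
    proof (rule sum.cong[OF refl])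
      fix j assume "j \<in> {..<n}"
      then show "R $$ (k,j) * D $$ (j,l) + D $$ (k,j) * T $$ (j,l) = R $$ (k,j) * R $$ (j,l) - T $$ (k,j) * T $$ (j,l)"
        using k l unfolding D_def by (simp add: algebra_simps)
    qed
    also have "\<dots> = (\<Sum>j<n. R $$ (k,j) * R $$ (j,l)) - (\<Sum>j<n. T $$ (k,j) * T $$ (j,l))"
      by (rule sum_subtractf)
    also have "\<dots> = (R * R) $$ (k,l) - (T * T) $$ (k,l)"
      using sum_prod_index[OF R R k l] sum_prod_index[OF T T k l] by simp
    also have "\<dots> = 0" using RR TT by simp
    finally show ?thesis by (simp add: eq_neg_iff_add_eq_0)
  qed
  define f where "f M l = (M *\<^sub>v col D l) \<bullet>c col D l" for M l
  have fexp: "f M l = (\<Sum>k<n. (\<Sum>j<n. M $$ (k,j) * D $$ (j,l)) * D $$ (l,k))"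
    if M: "M \<in> carrier_mat n n" and l: "l < n" for M l
  proof -
    have cD: "col D l \<in> carrier_vec n" using Dc by auto
    have "f M l = (\<Sum>k<n. (M *\<^sub>v col D l) $ k * cnj (col D l $ k))"
      unfolding f_def by (rule cinner_def[OF cD])
    also have "\<dots> = (\<Sum>k<n. (\<Sum>j<n. M $$ (k,j) * D $$ (j,l)) * D $$ (l,k))"
    proof (intro sum.cong refl)
      fix k assume "k \<in> {..<n}"
      then have k: "k < n" by simp
      have "(M *\<^sub>v col D l) $ k = (\<Sum>j<n. M $$ (k,j) * col D l $ j)" by (rule mult_mat_vec_index[OF M cD k])
      also have "\<dots> = (\<Sum>j<n. M $$ (k,j) * D $$ (j,l))" using Dc l by (intro sum.cong refl) simp
      finally show "(M *\<^sub>v col D l) $ k * cnj (col D l $ k) = (\<Sum>j<n. M $$ (k,j) * D $$ (j,l)) * D $$ (l,k)"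
        using Dc k l Dh[OF k l] by simp
    qed
    finally show ?thesis .
  qed
  have sumeq: "(\<Sum>l<n. f R l) = - (\<Sum>l<n. f T l)"
  proof -
    have "(\<Sum>l<n. f R l) = (\<Sum>l<n. \<Sum>k<n. - ((\<Sum>j<n. D $$ (k,j) * T $$ (j,l)) * D $$ (l,k)))"
      using fexp[OF R] RDT by simp
    also have "\<dots> = - (\<Sum>l<n. \<Sum>k<n. \<Sum>j<n. D $$ (k,j) * T $$ (j,l) * D $$ (l,k))"
      by (simp add: sum_negf sum_distrib_right)
    also have "(\<Sum>l<n. \<Sum>k<n. \<Sum>j<n. D $$ (k,j) * T $$ (j,l) * D $$ (l,k)) = (\<Sum>k<n. \<Sum>j<n. \<Sum>l<n. D $$ (k,j) * T $$ (j,l) * D $$ (l,k))"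
      by (rule sum3_rot)
    also have "\<dots> = (\<Sum>k<n. \<Sum>j<n. \<Sum>l<n. T $$ (j,l) * D $$ (l,k) * D $$ (k,j))"
      by (simp add: mult_ac)
    also have "\<dots> = (\<Sum>l<n. f T l)"
      using fexp[OF T] by (simp add: sum_distrib_right)
    finally show ?thesis .
  qed
  have Dcol: "col D l \<in> carrier_vec n" for l using Dc by auto
  have fR: "Re (f R l) \<ge> 0" and fT: "Re (f T l) \<ge> 0" for l
    using Rp Tp Dcol[of l] unfolding psd_def f_def by auto
  have "(\<Sum>l<n. Re (f R l)) + (\<Sum>l<n. Re (f T l)) = 0"
    using arg_cong[OF sumeq, of Re] by (simp add: Re_sum)
  moreover have "(\<Sum>l<n. Re (f R l)) \<ge> 0" using fR by (simp add: sum_nonneg)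
  moreover have "(\<Sum>l<n. Re (f T l)) \<ge> 0" using fT by (simp add: sum_nonneg)
  ultimately have s0: "(\<Sum>l<n. Re (f R l)) = 0" by linarith
  have colz: "col D l = 0\<^sub>v n" if l: "l < n" for l
  proof -
    have "Re (f R l) = 0" using s0 fR l by (subst (asm) sum_nonneg_eq_0_iff) auto
    then have "R *\<^sub>v col D l = 0\<^sub>v n" using psd_zero[OF R Rh Rp Dcol] unfolding f_def by blast
    then have "A *\<^sub>v col D l = 0\<^sub>v n"
      unfolding RR[symmetric] using assoc_mult_mat_vec[OF R R Dcol[of l]] mat_vec_zero[OF R] by simp
    then show ?thesis using inj Dcol[of l] by blast
  qed
  show ?thesis
  proof (rule eq_matI)
    fix i j assume "i < dim_row T" "j < dim_col T"
    then have i: "i < n" and j: "j < n" using T by auto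
    have "D $$ (i,j) = col D j $ i" using Dc i j by simp
    also have "\<dots> = 0" using colz[OF j] i by simp
    finally show "R $$ (i,j) = T $$ (i,j)" using i j unfolding D_def by simp
  qed (use R T in auto)
qed

lemma Kfield_cases: "K = \<real> \<or> K = UNIV \<Longrightarrow> (K = \<real> \<Longrightarrow> P) \<Longrightarrow> (K = UNIV \<Longrightarrow> P) \<Longrightarrow> P"
  by blast

lemma K_01: "K = \<real> \<or> K = UNIV \<Longrightarrow> (0::complex) \<in> K \<and> (1::complex) \<in> K"
  by auto

lemma K_mult: "K = \<real> \<or> K = UNIV \<Longrightarrow> x \<in> K \<Longrightarrow> y \<in> K \<Longrightarrow> x * y \<in> K"
  by (auto intro: Reals_mult)

lemma K_add: "K = \<real> \<or> K = UNIV \<Longrightarrow> x \<in> K \<Longrightarrow> y \<in> K \<Longrightarrow> x + y \<in> K"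
  by (auto intro: Reals_add)

lemma K_diff: "K = \<real> \<or> K = UNIV \<Longrightarrow> x \<in> K \<Longrightarrow> y \<in> K \<Longrightarrow> x - y \<in> K"
  by (auto intro: Reals_diff)

lemma K_uminus: "K = \<real> \<or> K = UNIV \<Longrightarrow> x \<in> K \<Longrightarrow> - x \<in> K"
  by (auto intro: Reals_minus)

lemma K_cnj: "K = \<real> \<or> K = UNIV \<Longrightarrow> x \<in> K \<Longrightarrow> cnj x \<in> K"
  by (auto simp: Reals_cnj_iff)

lemma K_sum: assumes "K = \<real> \<or> K = UNIV" "\<And>i. i \<in> A \<Longrightarrow> g i \<in> K" shows "sum g A \<in> K"
  using assms by (auto intro: sum_in_Reals)

locale fctx =
  fixes K :: "complex set" and n N :: nat and f :: "nat \<Rightarrow> complex vec"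
  assumes field: "K = \<real> \<or> K = UNIV" and frame: "is_frame K n N f"
begin

abbreviation "S \<equiv> frame_op n N f"

lemma fh: "i < N \<Longrightarrow> f i \<in> hspace K n" using frame unfolding is_frame_def by auto

lemma fc: "i < N \<Longrightarrow> f i \<in> carrier_vec n" using fh unfolding hspace_def by auto

lemma fK: "i < N \<Longrightarrow> k < n \<Longrightarrow> f i $ k \<in> K" using fh unfolding hspace_def by auto

lemma S_carrier: "S \<in> carrier_mat n n"
  unfolding frame_op_def synthesis_op_def analysis_op_def by auto

lemma S_index: assumes k: "k < n" and l: "l < n"
  shows "S $$ (k,l) = (\<Sum>i<N. f i $ k * cnj (f i $ l))"
proof -
  have "S $$ (k,l) = (\<Sum>i<N. synthesis_op n N f $$ (k,i) * analysis_op n N f $$ (i,l))"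
    unfolding frame_op_def by (rule sum_prod_index[OF _ _ k l]) (auto simp: synthesis_op_def analysis_op_def)
  also have "\<dots> = (\<Sum>i<N. f i $ k * cnj (f i $ l))"
    using k l by (intro sum.cong refl) (auto simp: synthesis_op_def analysis_op_def)
  finally show ?thesis .
qed

lemma S_vec: assumes v: "v \<in> carrier_vec n" and k: "k < n"
  shows "(S *\<^sub>v v) $ k = (\<Sum>i<N. (v \<bullet>c f i) * f i $ k)"
proof -
  have "(S *\<^sub>v v) $ k = (\<Sum>l<n. S $$ (k,l) * v $ l)" by (rule mult_mat_vec_index[OF S_carrier v k])
  also have "\<dots> = (\<Sum>l<n. \<Sum>i<N. f i $ k * cnj (f i $ l) * v $ l)"
    using k by (simp add: S_index sum_distrib_right)
  also have "\<dots> = (\<Sum>i<N. \<Sum>l<n. f i $ k * cnj (f i $ l) * v $ l)" by (rule sum.swap)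
  also have "\<dots> = (\<Sum>i<N. (v \<bullet>c f i) * f i $ k)"
  proof (rule sum.cong[OF refl])
    fix i assume "i \<in> {..<N}"
    then have i: "i < N" by simp
    show "(\<Sum>l<n. f i $ k * cnj (f i $ l) * v $ l) = (v \<bullet>c f i) * f i $ k"
      unfolding cinner_def[OF fc[OF i]] by (simp add: sum_distrib_left sum_distrib_right mult_ac)
  qed
  finally show ?thesis .
qed

lemma S_herm: "mat_adjoint S = S"
proof (rule eq_matI)
  fix k l assume "k < dim_row S" "l < dim_col S"
  then have k: "k < n" and l: "l < n" using S_carrier by auto
  show "mat_adjoint S $$ (k,l) = S $$ (k,l)"
    using k l S_carrier by (simp add: S_index cnj_sum mult.commute)
qed (use S_carrier in auto)

lemma S_quad: assumes v: "v \<in> carrier_vec n"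
  shows "(S *\<^sub>v v) \<bullet>c v = (\<Sum>i<N. (v \<bullet>c f i) * cnj (v \<bullet>c f i))"
proof -
  have "(S *\<^sub>v v) \<bullet>c v = (\<Sum>k<n. (\<Sum>i<N. (v \<bullet>c f i) * f i $ k) * cnj (v $ k))"
    unfolding cinner_def[OF v] using v by (intro sum.cong refl) (simp add: S_vec)
  also have "\<dots> = (\<Sum>i<N. \<Sum>k<n. (v \<bullet>c f i) * (f i $ k * cnj (v $ k)))"
    by (simp add: sum_distrib_left sum_distrib_right sum.swap[of _ "{..<n}"] mult_ac)
  also have "\<dots> = (\<Sum>i<N. (v \<bullet>c f i) * (f i \<bullet>c v))"
    by (intro sum.cong refl) (simp add: cinner_def[OF v] sum_distrib_left)
  also have "\<dots> = (\<Sum>i<N. (v \<bullet>c f i) * cnj (v \<bullet>c f i))"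
    using v fc by (intro sum.cong refl) (simp add: inner_sym[of _ n])
  finally show ?thesis .
qed

lemma unit_hspace: "k < n \<Longrightarrow> unit_vec n k \<in> hspace K n"
  using field unfolding hspace_def by (auto simp: unit_vec_def)

lemma inner_unit: fixes v :: "complex vec" assumes k: "k < n" shows "v \<bullet>c unit_vec n k = v $ k"
proof -
  have "v \<bullet>c unit_vec n k = (\<Sum>j<n. v $ j * cnj (unit_vec n k $ j))" by (rule cinner_def) simp
  also have "\<dots> = (\<Sum>j<n. if j = k then v $ j else 0)" using k by (intro sum.cong refl) auto
  also have "\<dots> = v $ k" using k by simp
  finally show ?thesis .
qed

lemma unit_inner_left: assumes v: "v \<in> carrier_vec n" and k: "k < n" shows "unit_vec n k \<bullet>c v = cnj (v $ k)"
proof -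
  have "unit_vec n k \<bullet>c v = (\<Sum>j<n. unit_vec n k $ j * cnj (v $ j))" by (rule cinner_def[OF v])
  also have "\<dots> = (\<Sum>j<n. if j = k then cnj (v $ j) else 0)" using k by (intro sum.cong refl) auto
  also have "\<dots> = cnj (v $ k)" using k by simp
  finally show ?thesis .
qed

lemma perp_zero: assumes v: "v \<in> carrier_vec n" and perp: "\<forall>i<N. v \<bullet>c f i = 0"
  shows "v = 0\<^sub>v n"
proof (rule eq_vecI)
  fix k assume "k < dim_vec (0\<^sub>v n :: complex vec)"
  then have k: "k < n" by simp
  have "unit_vec n k \<in> kspan K n f {..<N}" using frame unit_hspace[OF k] unfolding is_frame_def by auto
  then obtain c where c: "unit_vec n k = vec n (\<lambda>j. \<Sum>i<N. c i * f i $ j)"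
    unfolding kspan_def by auto
  have "v $ k = v \<bullet>c unit_vec n k" using inner_unit[OF k] by simp
  also have "\<dots> = (\<Sum>j<n. v $ j * cnj (\<Sum>i<N. c i * f i $ j))"
    unfolding c by (subst cinner_def[of _ n]) auto
  also have "\<dots> = (\<Sum>i<N. cnj (c i) * (v \<bullet>c f i))"
    by (simp add: cinner_def[OF fc] cnj_sum sum_distrib_left sum_distrib_right sum.swap[of _ "{..<N}"] mult_ac)
  also have "\<dots> = 0" using perp by simp
  finally show "v $ k = 0\<^sub>v n $ k" using k by simp
qed (use v in auto)

lemma S_pd: assumes v: "v \<in> carrier_vec n" and v0: "v \<noteq> 0\<^sub>v n"
  shows "0 < Re ((S *\<^sub>v v) \<bullet>c v)"
proof -
  have eq: "Re ((S *\<^sub>v v) \<bullet>c v) = (\<Sum>i<N. (cmod (v \<bullet>c f i))\<^sup>2)"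
    unfolding S_quad[OF v] by (simp add: Re_sum complex_mult_cnj cmod_def)
  have "\<exists>i<N. v \<bullet>c f i \<noteq> 0" using perp_zero[OF v] v0 by blast
  then obtain i where i: "i < N" "v \<bullet>c f i \<noteq> 0" by blast
  have "0 < (cmod (v \<bullet>c f i))\<^sup>2" using i by simp
  also have "\<dots> \<le> (\<Sum>i<N. (cmod (v \<bullet>c f i))\<^sup>2)"
    using i by (intro member_le_sum) auto
  finally show ?thesis unfolding eq .
qed

lemma S_inj: "v \<in> carrier_vec n \<Longrightarrow> S *\<^sub>v v = 0\<^sub>v n \<Longrightarrow> v = 0\<^sub>v n"
  using S_pd[of v] by force

end

context fctx
begin

lemma S_det: "det S \<noteq> 0"
  using det_0_iff_vec_prod_zero_field[OF S_carrier] S_inj by blast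

lemma S_inv_ex: "\<exists>B. B \<in> carrier_mat n n \<and> S * B = 1\<^sub>m n \<and> B * S = 1\<^sub>m n"
proof -
  from det_non_zero_imp_unit[OF S_carrier S_det, of "()"]
  have "S \<in> Units (ring_mat TYPE(complex) n ())" .
  then obtain B where BS: "B * S = 1\<^sub>m n" and B: "B \<in> carrier_mat n n"
    unfolding Units_def ring_mat_def by auto
  have "S * B = 1\<^sub>m n" by (rule mat_mult_left_right_inverse[OF B S_carrier BS])
  then show ?thesis using B BS by blast
qed

abbreviation "Si \<equiv> inv_mat n S"

lemma Si_props: "Si \<in> carrier_mat n n \<and> S * Si = 1\<^sub>m n \<and> Si * S = 1\<^sub>m n"
proof -
  have "\<exists>!B. B \<in> carrier_mat n n \<and> S * B = 1\<^sub>m n \<and> B * S = 1\<^sub>m n"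
  proof (rule ex_ex1I)
    show "\<exists>B. B \<in> carrier_mat n n \<and> S * B = 1\<^sub>m n \<and> B * S = 1\<^sub>m n" by (rule S_inv_ex)
  next
    fix B1 B2 assume 1: "B1 \<in> carrier_mat n n \<and> S * B1 = 1\<^sub>m n \<and> B1 * S = 1\<^sub>m n"
      and 2: "B2 \<in> carrier_mat n n \<and> S * B2 = 1\<^sub>m n \<and> B2 * S = 1\<^sub>m n"
    have "B1 = B1 * (S * B2)" using 1 2 right_mult_one_mat[of B1 n n] by simp
    also have "\<dots> = (B1 * S) * B2" using 1 2 S_carrier by (intro assoc_mult_mat[symmetric]) auto
    also have "\<dots> = B2" using 1 2 left_mult_one_mat[of B2 n n] by simp
    finally show "B1 = B2" .
  qed
  then show ?thesis unfolding inv_mat_def by (rule theI')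
qed

lemma Si_carrier: "Si \<in> carrier_mat n n" using Si_props by auto

lemma Si_herm: "mat_adjoint Si = Si"
proof -
  have "mat_adjoint Si * S = mat_adjoint (S * Si)"
    using adj_mult[OF S_carrier Si_carrier] S_herm by simp
  also have "\<dots> = 1\<^sub>m n" using Si_props by simp
  finally have 1: "mat_adjoint Si * S = 1\<^sub>m n" .
  have aSi: "mat_adjoint Si \<in> carrier_mat n n" using Si_carrier by simp
  have "mat_adjoint Si = mat_adjoint Si * (S * Si)" using Si_props right_mult_one_mat[OF aSi] by simp
  also have "\<dots> = (mat_adjoint Si * S) * Si" by (rule assoc_mult_mat[OF aSi S_carrier Si_carrier, symmetric])
  also have "\<dots> = Si" using 1 Si_carrier by simp
  finally show ?thesis .
qed

lemma S_Si_vec: "v \<in> carrier_vec n \<Longrightarrow> S *\<^sub>v (Si *\<^sub>v v) = v"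
  using assoc_mult_mat_vec[OF S_carrier Si_carrier, of v] Si_props by simp

lemma Si_S_vec: "v \<in> carrier_vec n \<Longrightarrow> Si *\<^sub>v (S *\<^sub>v v) = v"
  using assoc_mult_mat_vec[OF Si_carrier S_carrier, of v] Si_props by simp

lemma Si_pd: assumes v: "v \<in> carrier_vec n" and v0: "v \<noteq> 0\<^sub>v n"
  shows "0 < Re ((Si *\<^sub>v v) \<bullet>c v)"
proof -
  define w where "w = Si *\<^sub>v v"
  have w: "w \<in> carrier_vec n" unfolding w_def using Si_carrier v by auto
  have vw: "v = S *\<^sub>v w" unfolding w_def using S_Si_vec[OF v] by simp
  have w0: "w \<noteq> 0\<^sub>v n" using v0 vw mat_vec_zero[OF S_carrier] by auto
  have "(Si *\<^sub>v v) \<bullet>c v = w \<bullet>c v" unfolding w_def ..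
  also have "\<dots> = w \<bullet>c (S *\<^sub>v w)" by (subst vw[symmetric]) (rule refl)
  also have "\<dots> = (S *\<^sub>v w) \<bullet>c w" using herm_inner[OF S_carrier S_herm w w] by simp
  finally show ?thesis using S_pd[OF w w0] by simp
qed

lemma Si_inj: "v \<in> carrier_vec n \<Longrightarrow> Si *\<^sub>v v = 0\<^sub>v n \<Longrightarrow> v = 0\<^sub>v n"
  using Si_pd[of v] by force

abbreviation "R \<equiv> inv_sqrt_mat n S"

lemma R_props: "R \<in> carrier_mat n n \<and> mat_adjoint R = R \<and> psd n R \<and> R * R = Si"
proof -
  have "\<exists>!R. R \<in> carrier_mat n n \<and> mat_adjoint R = R \<and> psd n R \<and> R * R = Si"
  proof (rule ex_ex1I)
    show "\<exists>R. R \<in> carrier_mat n n \<and> mat_adjoint R = R \<and> psd n R \<and> R * R = Si"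
      by (rule sqrt_exists[OF Si_carrier Si_herm]) (use Si_pd in blast)
  next
    fix R1 R2 assume 1: "R1 \<in> carrier_mat n n \<and> mat_adjoint R1 = R1 \<and> psd n R1 \<and> R1 * R1 = Si"
      and 2: "R2 \<in> carrier_mat n n \<and> mat_adjoint R2 = R2 \<and> psd n R2 \<and> R2 * R2 = Si"
    show "R1 = R2" using 1 2 sqrt_unique[of R1 n Si R2] Si_inj by blast
  qed
  then have "R \<in> carrier_mat n n \<and> mat_adjoint R = R \<and> psd n R \<and> R * R = Si"
    unfolding inv_sqrt_mat_def psd_def by (rule theI')
  then show ?thesis .
qed

definition g :: "nat \<Rightarrow> complex vec" where "g i = Si *\<^sub>v f i"

lemma g_carrier: "i < N \<Longrightarrow> g i \<in> carrier_vec n"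
  unfolding g_def using Si_carrier fc by auto

lemma Rf_norm: assumes i: "i < N"
  shows "g i \<bullet>c f i = complex_of_real (norm_sq (R *\<^sub>v f i))"
proof -
  have Rc: "R \<in> carrier_mat n n" and Rh: "mat_adjoint R = R" and RR: "R * R = Si" using R_props by auto
  have fi: "f i \<in> carrier_vec n" using fc[OF i] .
  have Rf: "R *\<^sub>v f i \<in> carrier_vec n" using Rc fi by auto
  have "(R *\<^sub>v f i) \<bullet>c (R *\<^sub>v f i) = f i \<bullet>c (R *\<^sub>v (R *\<^sub>v f i))"
    by (rule herm_inner[OF Rc Rh fi Rf])
  also have "R *\<^sub>v (R *\<^sub>v f i) = Si *\<^sub>v f i" using assoc_mult_mat_vec[OF Rc Rc fi] RR by simp
  also have "f i \<bullet>c (Si *\<^sub>v f i) = (Si *\<^sub>v f i) \<bullet>c f i" using herm_inner[OF Si_carrier Si_herm fi fi] by simp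
  finally have "g i \<bullet>c f i = (R *\<^sub>v f i) \<bullet>c (R *\<^sub>v f i)" unfolding g_def by simp
  then show ?thesis unfolding norm_sq_def using inner_self_ofreal by metis
qed

lemma norm_sq_ge0: "norm_sq v \<ge> 0" unfolding norm_sq_def by (rule inner_self_ge0)

lemma f_inner_g: assumes i: "i < N"
  shows "f i \<bullet>c g i = complex_of_real (norm_sq (R *\<^sub>v f i))"
  using inner_sym[OF g_carrier[OF i] fc[OF i]] Rf_norm[OF i] by simp

lemma coef_K: assumes v: "v \<in> hspace K n" and i: "i < N"
  shows "v \<bullet>c f i \<in> K"
proof -
  have vc: "v \<in> carrier_vec n" and vK: "\<forall>k<n. v $ k \<in> K" using v unfolding hspace_def by auto
  show ?thesis unfolding cinner_def[OF fc[OF i]]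
    using vK fK[OF i] field by (intro K_sum K_mult K_cnj) auto
qed

lemma recon1: assumes v: "v \<in> carrier_vec n"
  shows "v = vec n (\<lambda>k. \<Sum>i<N. (v \<bullet>c f i) * g i $ k)"
proof (rule eq_vecI)
  fix k assume "k < dim_vec (vec n (\<lambda>k. \<Sum>i<N. (v \<bullet>c f i) * g i $ k))"
  then have k: "k < n" by simp
  have Sv: "S *\<^sub>v v \<in> carrier_vec n" using S_carrier v by auto
  have "v $ k = (Si *\<^sub>v (S *\<^sub>v v)) $ k" using Si_S_vec[OF v] by simp
  also have "\<dots> = (\<Sum>l<n. Si $$ (k,l) * (S *\<^sub>v v) $ l)" by (rule mult_mat_vec_index[OF Si_carrier Sv k])
  also have "\<dots> = (\<Sum>l<n. \<Sum>i<N. Si $$ (k,l) * ((v \<bullet>c f i) * f i $ l))"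
    using v by (intro sum.cong refl) (simp add: S_vec sum_distrib_left)
  also have "\<dots> = (\<Sum>i<N. \<Sum>l<n. Si $$ (k,l) * ((v \<bullet>c f i) * f i $ l))" by (rule sum.swap)
  also have "\<dots> = (\<Sum>i<N. (v \<bullet>c f i) * g i $ k)"
  proof (rule sum.cong[OF refl])
    fix i assume "i \<in> {..<N}"
    then have i: "i < N" by simp
    have "g i $ k = (\<Sum>l<n. Si $$ (k,l) * f i $ l)" unfolding g_def by (rule mult_mat_vec_index[OF Si_carrier fc[OF i] k])
    then show "(\<Sum>l<n. Si $$ (k,l) * ((v \<bullet>c f i) * f i $ l)) = (v \<bullet>c f i) * g i $ k"
      by (simp add: sum_distrib_left mult_ac)
  qed
  finally show "v $ k = vec n (\<lambda>k. \<Sum>i<N. (v \<bullet>c f i) * g i $ k) $ k" using k by simp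
qed (use v in auto)

lemma recon2: assumes v: "v \<in> carrier_vec n"
  shows "v = vec n (\<lambda>k. \<Sum>i<N. (v \<bullet>c g i) * f i $ k)"
proof (rule eq_vecI)
  fix k assume "k < dim_vec (vec n (\<lambda>k. \<Sum>i<N. (v \<bullet>c g i) * f i $ k))"
  then have k: "k < n" by simp
  have w: "Si *\<^sub>v v \<in> carrier_vec n" using Si_carrier v by auto
  have "v $ k = (S *\<^sub>v (Si *\<^sub>v v)) $ k" using S_Si_vec[OF v] by simp
  also have "\<dots> = (\<Sum>i<N. ((Si *\<^sub>v v) \<bullet>c f i) * f i $ k)" by (rule S_vec[OF w k])
  also have "\<dots> = (\<Sum>i<N. (v \<bullet>c g i) * f i $ k)"
  proof (rule sum.cong[OF refl])
    fix i assume "i \<in> {..<N}"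
    then have i: "i < N" by simp
    have "(Si *\<^sub>v v) \<bullet>c f i = v \<bullet>c (Si *\<^sub>v f i)" by (rule herm_inner[OF Si_carrier Si_herm v fc[OF i]])
    then show "((Si *\<^sub>v v) \<bullet>c f i) * f i $ k = (v \<bullet>c g i) * f i $ k" unfolding g_def by simp
  qed
  finally show "v $ k = vec n (\<lambda>k. \<Sum>i<N. (v \<bullet>c g i) * f i $ k) $ k" using k by simp
qed (use v in auto)

end

lemma sr_rank1: assumes n: "n > 0" and x: "x \<in> carrier_vec n" and y: "y \<in> carrier_vec n"
  shows "spectral_radius (mat n n (\<lambda>(k,l). x $ k * cnj (y $ l))) = cmod (x \<bullet>c y)"
proof -
  define M where "M = mat n n (\<lambda>(k,l). x $ k * cnj (y $ l))"
  have Mc: "M \<in> carrier_mat n n" unfolding M_def by auto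
  have Mv: "M *\<^sub>v v = (v \<bullet>c y) \<cdot>\<^sub>v x" if v: "v \<in> carrier_vec n" for v
  proof (rule eq_vecI)
    fix k assume "k < dim_vec ((v \<bullet>c y) \<cdot>\<^sub>v x)"
    then have k: "k < n" using x by simp
    have "(M *\<^sub>v v) $ k = (\<Sum>l<n. x $ k * cnj (y $ l) * v $ l)"
      using mult_mat_vec_index[OF Mc v k] k unfolding M_def by simp
    also have "\<dots> = (v \<bullet>c y) * x $ k"
      unfolding cinner_def[OF y] by (simp add: sum_distrib_left sum_distrib_right mult_ac)
    finally show "(M *\<^sub>v v) $ k = ((v \<bullet>c y) \<cdot>\<^sub>v x) $ k" using k x by simp
  qed (use Mc x in auto)
  have spec: "\<mu> = 0 \<or> \<mu> = x \<bullet>c y" if "\<mu> \<in> spectrum M" for \<mu>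
  proof -
    from that obtain v where v: "v \<in> carrier_vec n" "v \<noteq> 0\<^sub>v n" and ev: "M *\<^sub>v v = \<mu> \<cdot>\<^sub>v v"
      unfolding spectrum_def eigenvalue_def eigenvector_def using Mc by auto
    show ?thesis
    proof (cases "\<mu> = 0")
      case True
      then show ?thesis by simp
    next
      case False
      then have mu: "\<mu> \<noteq> 0" .
      have eq: "(v \<bullet>c y) \<cdot>\<^sub>v x = \<mu> \<cdot>\<^sub>v v" using ev Mv[OF v(1)] by simp
      have vy: "v \<bullet>c y \<noteq> 0"
      proof
        assume "v \<bullet>c y = 0"
        moreover have "0 \<cdot>\<^sub>v x = 0\<^sub>v n" using x by (intro eq_vecI) auto
        ultimately have z: "\<mu> \<cdot>\<^sub>v v = 0\<^sub>v n" using eq by simp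
        have "v = 0\<^sub>v n"
        proof (rule eq_vecI)
          fix k assume "k < dim_vec (0\<^sub>v n :: complex vec)"
          then have k: "k < n" by simp
          have "\<mu> * v $ k = 0" using arg_cong[OF z, of "\<lambda>z. z $ k"] k v(1) by simp
          then show "v $ k = 0\<^sub>v n $ k" using mu k by simp
        qed (use v(1) in auto)
        then show False using v by simp
      qed
      have "(v \<bullet>c y) * (x \<bullet>c y) = \<mu> * (v \<bullet>c y)"
        using arg_cong[OF eq, of "\<lambda>z. z \<bullet>c y"] cinner_smult_left[OF x y] cinner_smult_left[OF v(1) y] by simp
      then show ?thesis using vy by (simp add: mult.commute)
    qed
  qed
  have le: "spectral_radius M \<le> cmod (x \<bullet>c y)"
  proof -
    obtain \<mu> where mu: "\<mu> \<in> spectrum M" "spectral_radius M = cmod \<mu>"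
      using spectral_radius_mem_max(1)[OF Mc n] by auto
    then show ?thesis using spec[OF mu(1)] by auto
  qed
  have ge: "cmod (x \<bullet>c y) \<le> spectral_radius M"
  proof (cases "x \<bullet>c y = 0")
    case True
    obtain \<mu> where mu: "\<mu> \<in> spectrum M" "spectral_radius M = cmod \<mu>"
      using spectral_radius_mem_max(1)[OF Mc n] by auto
    then show ?thesis using True by simp
  next
    case False
    then have x0: "x \<noteq> 0\<^sub>v n" using y by auto
    have "eigenvector M x (x \<bullet>c y)" unfolding eigenvector_def using Mc x x0 Mv[OF x] by auto
    then have "x \<bullet>c y \<in> spectrum M" unfolding spectrum_def eigenvalue_def by auto
    then show ?thesis using spectral_radius_mem_max(2)[OF Mc n] by auto
  qed
  show ?thesis using le ge unfolding M_def by simp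
qed

context fctx
begin

lemma g_hspace: assumes i: "i < N" shows "g i \<in> hspace K n"
proof (cases "K = UNIV")
  case True
  then show ?thesis using g_carrier[OF i] unfolding hspace_def by auto
next
  case False
  then have KR: "K = \<real>" using field by auto
  have Sreal: "cnj (S $$ (k,l)) = S $$ (k,l)" if "k < n" "l < n" for k l
  proof -
    have r: "cnj (f j $ m) = f j $ m" if "j < N" "m < n" for j m
      using fK[OF that] KR by (simp add: Reals_cnj_iff)
    show ?thesis using that by (simp add: S_index cnj_sum r)
  qed
  define w where "w = g i"
  have w: "w \<in> carrier_vec n" unfolding w_def by (rule g_carrier[OF i])
  have Sw: "S *\<^sub>v w = f i" unfolding w_def g_def by (rule S_Si_vec[OF fc[OF i]])
  have Swc: "S *\<^sub>v conjugate w = S *\<^sub>v w"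
  proof (rule eq_vecI)
    fix k assume "k < dim_vec (S *\<^sub>v w)"
    then have k: "k < n" using S_carrier by simp
    have cw: "conjugate w \<in> carrier_vec n" using w by simp
    have "(S *\<^sub>v conjugate w) $ k = (\<Sum>l<n. S $$ (k,l) * cnj (w $ l))"
      using mult_mat_vec_index[OF S_carrier cw k] w by simp
    also have "\<dots> = cnj (\<Sum>l<n. S $$ (k,l) * w $ l)"
      using Sreal[OF k] by (simp add: cnj_sum)
    also have "\<dots> = cnj ((S *\<^sub>v w) $ k)" using mult_mat_vec_index[OF S_carrier w k] by simp
    also have "\<dots> = (S *\<^sub>v w) $ k" unfolding Sw using fK[OF i k] KR by (simp add: Reals_cnj_iff)
    finally show "(S *\<^sub>v conjugate w) $ k = (S *\<^sub>v w) $ k" .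
  qed (use S_carrier in auto)
  have cw: "conjugate w = w" using Si_S_vec[of "conjugate w"] Si_S_vec[OF w] Swc w by simp
  have "cnj (w $ k) = w $ k" if "k < n" for k
  proof -
    have "conjugate w $ k = cnj (w $ k)" using that w by simp
    then show ?thesis using cw by simp
  qed
  then show ?thesis using w KR unfolding hspace_def w_def by (auto simp: Reals_cnj_iff)
qed

lemma canonical_dual: "is_dual_frame K n N f g"
proof -
  have sub: "kspan K n g {..<N} \<subseteq> hspace K n"
  proof
    fix x assume "x \<in> kspan K n g {..<N}"
    then obtain c where x: "x = vec n (\<lambda>k. \<Sum>i\<in>{..<N}. c i * (g i $ k))" and c: "\<forall>i\<in>{..<N}. c i \<in> K"
      unfolding kspan_def by auto
    have "\<forall>k<n. x $ k \<in> K"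
    proof (intro allI impI)
      fix k assume k: "k < n"
      have "g i $ k \<in> K" if "i < N" for i using g_hspace[OF that] k unfolding hspace_def by auto
      then show "x $ k \<in> K" unfolding x using k c field by (auto intro!: K_sum K_mult)
    qed
    then show "x \<in> hspace K n" unfolding hspace_def x by auto
  qed
  have sup: "hspace K n \<subseteq> kspan K n g {..<N}"
  proof
    fix v assume v: "v \<in> hspace K n"
    then have vc: "v \<in> carrier_vec n" unfolding hspace_def by auto
    show "v \<in> kspan K n g {..<N}" unfolding kspan_def
      using recon1[OF vc] coef_K[OF v] by auto
  qed
  have fr: "is_frame K n N g" unfolding is_frame_def using g_hspace sub sup by auto
  show ?thesis unfolding is_dual_frame_def using fr recon1 recon2 unfolding hspace_def by auto
qed

lemma trace_eq:
  assumes dual: "is_dual_frame K n N f h" and U: "U \<subseteq> {..<N}"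
    and inter: "kspan K n f U \<inter> kspan K n f ({..<N} - U) = {0\<^sub>v n}"
  shows "(\<Sum>i\<in>U. f i \<bullet>c h i) = (\<Sum>i\<in>U. f i \<bullet>c g i)"
proof -
  have hh: "h i \<in> hspace K n" if "i < N" for i using dual that unfolding is_dual_frame_def is_frame_def by auto
  have hc: "h i \<in> carrier_vec n" if "i < N" for i using hh[OF that] unfolding hspace_def by auto
  have rech: "v = vec n (\<lambda>k. \<Sum>i<N. (v \<bullet>c h i) * f i $ k)" if "v \<in> hspace K n" for v
    using dual that unfolding is_dual_frame_def by auto
  define c where "c k i = cnj (h i $ k - g i $ k)" for k i
  have cK: "c k i \<in> K" if "k < n" "i < N" for k i
    using hh[OF that(2)] g_hspace[OF that(2)] that field unfolding c_def hspace_def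
    by (intro K_cnj K_diff) auto
  have zero: "(\<Sum>i<N. c k i * f i $ l) = 0" if k: "k < n" and l: "l < n" for k l
  proof -
    have e: "unit_vec n k \<in> hspace K n" by (rule unit_hspace[OF k])
    have ec: "unit_vec n k \<in> carrier_vec n" by simp
    have "unit_vec n k $ l = (\<Sum>i<N. (unit_vec n k \<bullet>c h i) * f i $ l)"
      using arg_cong[OF rech[OF e], of "\<lambda>z. z $ l"] l by simp
    also have "\<dots> = (\<Sum>i<N. cnj (h i $ k) * f i $ l)"
      by (intro sum.cong refl) (simp add: unit_inner_left[OF hc k])
    finally have 1: "unit_vec n k $ l = (\<Sum>i<N. cnj (h i $ k) * f i $ l)" .
    have "unit_vec n k $ l = (\<Sum>i<N. (unit_vec n k \<bullet>c g i) * f i $ l)"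
      using arg_cong[OF recon2[OF ec], of "\<lambda>z. z $ l"] l by simp
    also have "\<dots> = (\<Sum>i<N. cnj (g i $ k) * f i $ l)"
      by (intro sum.cong refl) (simp add: unit_inner_left[OF g_carrier k])
    finally have 2: "unit_vec n k $ l = (\<Sum>i<N. cnj (g i $ k) * f i $ l)" .
    have "(\<Sum>i<N. c k i * f i $ l) = (\<Sum>i<N. cnj (h i $ k) * f i $ l) - (\<Sum>i<N. cnj (g i $ k) * f i $ l)"
      unfolding c_def by (simp add: sum_subtractf algebra_simps)
    then show ?thesis using 1 2 by simp
  qed
  have zeroU: "(\<Sum>i\<in>U. c k i * f i $ l) = 0" if k: "k < n" and l: "l < n" for k l
  proof -
    define w where "w = vec n (\<lambda>l. \<Sum>i\<in>U. c k i * (f i $ l))"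
    have w1: "w \<in> kspan K n f U" unfolding kspan_def w_def using cK[OF k] U by auto
    have split: "(\<Sum>i<N. c k i * f i $ l) = (\<Sum>i\<in>{..<N} - U. c k i * f i $ l) + (\<Sum>i\<in>U. c k i * f i $ l)" for l
      by (rule sum.subset_diff[OF U]) simp
    have "w = vec n (\<lambda>l. \<Sum>i\<in>{..<N} - U. (- c k i) * (f i $ l))"
    proof (rule eq_vecI)
      fix l assume "l < dim_vec (vec n (\<lambda>l. \<Sum>i\<in>{..<N} - U. (- c k i) * (f i $ l)))"
      then have l: "l < n" by simp
      show "w $ l = vec n (\<lambda>l. \<Sum>i\<in>{..<N} - U. (- c k i) * (f i $ l)) $ l"
        using zero[OF k l] split[of l] l unfolding w_def by (simp add: sum_negf eq_neg_iff_add_eq_0 add.commute)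
    qed (simp add: w_def)
    then have w2: "w \<in> kspan K n f ({..<N} - U)" unfolding kspan_def using cK[OF k] field
      by (auto intro!: exI[of _ "\<lambda>i. - c k i"] K_uminus)
    have "w = 0\<^sub>v n" using w1 w2 inter by blast
    then have "w $ l = 0" using l by simp
    then show ?thesis using l unfolding w_def by simp
  qed
  have "(\<Sum>i\<in>U. f i \<bullet>c h i) - (\<Sum>i\<in>U. f i \<bullet>c g i) = (\<Sum>i\<in>U. \<Sum>k<n. f i $ k * c k i)"
  proof -
    have "(\<Sum>i\<in>U. f i \<bullet>c h i) - (\<Sum>i\<in>U. f i \<bullet>c g i) = (\<Sum>i\<in>U. f i \<bullet>c h i - f i \<bullet>c g i)"
      by (rule sum_subtractf[symmetric])
    also have "\<dots> = (\<Sum>i\<in>U. \<Sum>k<n. f i $ k * c k i)"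
    proof (rule sum.cong[OF refl])
      fix i assume "i \<in> U"
      then have i: "i < N" using U by auto
      show "f i \<bullet>c h i - f i \<bullet>c g i = (\<Sum>k<n. f i $ k * c k i)"
        unfolding cinner_def[OF hc[OF i]] cinner_def[OF g_carrier[OF i]] c_def
        by (simp add: sum_subtractf[symmetric] algebra_simps)
    qed
    finally show ?thesis .
  qed
  also have "\<dots> = (\<Sum>k<n. \<Sum>i\<in>U. c k i * f i $ k)"
    by (subst sum.swap) (simp add: mult.commute)
  also have "\<dots> = 0" using zeroU by simp
  finally show ?thesis by simp
qed

end

context fctx
begin

lemma prod_term: assumes hc: "\<And>j. j < N \<Longrightarrow> h j \<in> carrier_vec n" and i: "i < N"
  shows "synthesis_op n N h * diag_one n N p i * analysis_op n N f
    = mat n n (\<lambda>(k,l). (complex_of_real (weight n N p i) \<cdot>\<^sub>v h i) $ k * cnj (f i $ l))"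
  (is "?L = ?M")
proof (rule eq_matI)
  let ?q = "complex_of_real (weight n N p i)"
  have Syn: "synthesis_op n N h \<in> carrier_mat n N" unfolding synthesis_op_def by auto
  have Dg: "diag_one n N p i \<in> carrier_mat N N" unfolding diag_one_def by auto
  have Ana: "analysis_op n N f \<in> carrier_mat N n" unfolding analysis_op_def by auto
  fix k l assume "k < dim_row ?M" "l < dim_col ?M"
  then have k: "k < n" and l: "l < n" by auto
  have SD: "(synthesis_op n N h * diag_one n N p i) $$ (k,m) = (if m = i then h i $ k * ?q else 0)"
    if m: "m < N" for m
  proof -
    have "(synthesis_op n N h * diag_one n N p i) $$ (k,m) = (\<Sum>j<N. synthesis_op n N h $$ (k,j) * diag_one n N p i $$ (j,m))"
      by (rule sum_prod_index[OF Syn Dg k m])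
    also have "\<dots> = (\<Sum>j<N. if j = i then (if m = i then h i $ k * ?q else 0) else 0)"
      using k m by (intro sum.cong refl) (auto simp: synthesis_op_def diag_one_def)
    also have "\<dots> = (if m = i then h i $ k * ?q else 0)" using i by simp
    finally show ?thesis .
  qed
  have "?L $$ (k,l) = (\<Sum>m<N. (synthesis_op n N h * diag_one n N p i) $$ (k,m) * analysis_op n N f $$ (m,l))"
    by (rule sum_prod_index[OF mult_carrier_mat[OF Syn Dg] Ana k l])
  also have "\<dots> = (\<Sum>m<N. if m = i then h i $ k * ?q * cnj (f i $ l) else 0)"
    using k l by (intro sum.cong refl) (auto simp: SD analysis_op_def)
  also have "\<dots> = h i $ k * ?q * cnj (f i $ l)" using i by simp
  also have "\<dots> = ?M $$ (k,l)" using k l hc[OF i] by simp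
  finally show "?L $$ (k,l) = ?M $$ (k,l)" .
qed (auto simp: synthesis_op_def analysis_op_def diag_one_def)

lemma weight_nonneg: assumes Nn: "N \<ge> n" and npos: "0 < n" and prob: "prob_seq N p"
  and wdef: "\<forall>i<N. (\<Sum>j<N. p j) - p i \<noteq> 0" and i: "i < N"
  shows "weight n N p i \<ge> 0"
proof -
  have s1: "(\<Sum>j<N. p j) = 1" and pi: "p i \<le> 1" using prob i unfolding prob_seq_def by auto
  have "1 - p i \<noteq> 0" using wdef i s1 by auto
  then have "1 - p i > 0" using pi by auto
  moreover have "real N - 1 \<ge> 0" using Nn npos by auto
  ultimately show ?thesis unfolding weight_def s1 by (intro mult_nonneg_nonneg divide_nonneg_nonneg) auto
qed

lemma sr_term: assumes hc: "\<And>j. j < N \<Longrightarrow> h j \<in> carrier_vec n" and i: "i < N" and npos: "0 < n"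
  and q: "weight n N p i \<ge> 0"
  shows "spectral_radius (synthesis_op n N h * diag_one n N p i * analysis_op n N f)
    = weight n N p i * cmod (h i \<bullet>c f i)"
proof -
  let ?q = "complex_of_real (weight n N p i)"
  have x: "?q \<cdot>\<^sub>v h i \<in> carrier_vec n" using hc[OF i] by simp
  have "spectral_radius (synthesis_op n N h * diag_one n N p i * analysis_op n N f) = cmod ((?q \<cdot>\<^sub>v h i) \<bullet>c f i)"
    using prod_term[of h i] hc i sr_rank1[OF npos x fc[OF i]] by simp
  also have "(?q \<cdot>\<^sub>v h i) \<bullet>c f i = ?q * (h i \<bullet>c f i)" by (rule cinner_smult_left[OF hc[OF i] fc[OF i]])
  also have "cmod (?q * (h i \<bullet>c f i)) = weight n N p i * cmod (h i \<bullet>c f i)"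
    using q by (simp add: norm_mult)
  finally show ?thesis .
qed

lemma R1p_formula: assumes hc: "\<And>j. j < N \<Longrightarrow> h j \<in> carrier_vec n" and npos: "0 < n"
  and q: "\<And>i. i < N \<Longrightarrow> weight n N p i \<ge> 0"
  shows "R1p n N p f h = Max ((\<lambda>i. weight n N p i * cmod (h i \<bullet>c f i)) ` {..<N})"
proof -
  have "{spectral_radius (synthesis_op n N h * D * analysis_op n N f) | D. D \<in> D1p n N p}
     = (\<lambda>i. spectral_radius (synthesis_op n N h * diag_one n N p i * analysis_op n N f)) ` {..<N}"
    unfolding D1p_def by auto
  also have "\<dots> = (\<lambda>i. weight n N p i * cmod (h i \<bullet>c f i)) ` {..<N}"
    using sr_term[OF hc _ npos q] by (intro image_cong refl) auto
  finally show ?thesis unfolding R1p_def by simp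
qed

lemma main:
  assumes npos: "0 < n" and Nn: "N \<ge> n" and prob: "prob_seq N p"
    and wdef: "\<forall>i<N. (\<Sum>j<N. p j) - p i \<noteq> 0"
    and inter: "kspan K n f {i. i < N \<and> weight n N p i * norm_sq (R *\<^sub>v f i) = Max ((\<lambda>i. weight n N p i * norm_sq (R *\<^sub>v f i)) ` {..<N})}
      \<inter> kspan K n f ({..<N} - {i. i < N \<and> weight n N p i * norm_sq (R *\<^sub>v f i) = Max ((\<lambda>i. weight n N p i * norm_sq (R *\<^sub>v f i)) ` {..<N})}) = {0\<^sub>v n}"
  shows "prob_spec_opt_dual K n N p f (\<lambda>i. Si *\<^sub>v f i)"
proof -
  define q where "q i = weight n N p i" for i
  define t where "t i = norm_sq (R *\<^sub>v f i)" for i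
  define a where "a i = q i * t i" for i
  define c where "c = Max (a ` {..<N})"
  define U1 where "U1 = {i. i < N \<and> a i = c}"
  have inter': "kspan K n f U1 \<inter> kspan K n f ({..<N} - U1) = {0\<^sub>v n}"
    using inter unfolding U1_def c_def a_def q_def t_def .
  have q0: "q i \<ge> 0" if "i < N" for i unfolding q_def by (rule weight_nonneg[OF Nn npos prob wdef that])
  have t0: "t i \<ge> 0" for i unfolding t_def by (rule norm_sq_ge0)
  have Npos: "N > 0" using Nn npos by auto
  have gg: "(\<lambda>i. Si *\<^sub>v f i) = g" by (rule ext) (simp add: g_def)
  have Rg: "R1p n N p f g = c"
  proof -
    have "R1p n N p f g = Max ((\<lambda>i. weight n N p i * cmod (g i \<bullet>c f i)) ` {..<N})"
      by (rule R1p_formula[OF g_carrier npos weight_nonneg[OF Nn npos prob wdef]])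
    also have "(\<lambda>i. weight n N p i * cmod (g i \<bullet>c f i)) ` {..<N} = a ` {..<N}"
    proof (intro image_cong refl)
      fix i assume "i \<in> {..<N}"
      then have i: "i < N" by simp
      show "weight n N p i * cmod (g i \<bullet>c f i) = a i"
        unfolding a_def q_def t_def Rf_norm[OF i] using norm_sq_ge0 by simp
    qed
    finally show ?thesis unfolding c_def .
  qed
  have lower: "c \<le> R1p n N p f h" if dual: "is_dual_frame K n N f h" for h
  proof -
    have hc: "h j \<in> carrier_vec n" if "j < N" for j
      using dual that unfolding is_dual_frame_def is_frame_def hspace_def by auto
    define T where "T i = weight n N p i * cmod (h i \<bullet>c f i)" for i
    have RT: "R1p n N p f h = Max (T ` {..<N})" unfolding T_def
      by (rule R1p_formula[OF hc npos weight_nonneg[OF Nn npos prob wdef]])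
    have "\<exists>i\<in>U1. c \<le> T i"
    proof (rule ccontr)
      assume "\<not> (\<exists>i\<in>U1. c \<le> T i)"
      then have lt: "T i < c" if "i \<in> U1" for i using that by force
      have "c \<in> a ` {..<N}" unfolding c_def using Npos by (intro Max_in) auto
      then obtain i0 where i0: "i0 < N" "a i0 = c" by auto
      then have U1ne: "i0 \<in> U1" unfolding U1_def by auto
      have U1sub: "U1 \<subseteq> {..<N}" unfolding U1_def by auto
      have fin: "finite U1" using U1sub finite_subset by blast
      have T0: "T i \<ge> 0" if "i < N" for i unfolding T_def using q0[OF that] by (simp add: q_def)
      have cpos: "c > 0" using lt[OF U1ne] T0[OF i0(1)] by simp
      have small: "cmod (h i \<bullet>c f i) < t i" if iU: "i \<in> U1" for i
      proof -
        have i: "i < N" and ai: "a i = c" using iU unfolding U1_def by auto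
        have qpos: "q i > 0" using ai cpos q0[OF i] unfolding a_def
          by (metis less_eq_real_def mult_eq_0_iff)
        have "q i * cmod (h i \<bullet>c f i) < q i * t i" using lt[OF iU] ai unfolding T_def a_def q_def by simp
        then show ?thesis using qpos by simp
      qed
      have "(\<Sum>i\<in>U1. t i) = Re (\<Sum>i\<in>U1. f i \<bullet>c g i)"
        using U1sub by (simp add: Re_sum f_inner_g t_def subset_iff)
      also have "\<dots> = Re (\<Sum>i\<in>U1. f i \<bullet>c h i)" using trace_eq[OF dual U1sub inter'] by simp
      also have "\<dots> = (\<Sum>i\<in>U1. Re (f i \<bullet>c h i))" by (simp add: Re_sum)
      also have "\<dots> \<le> (\<Sum>i\<in>U1. cmod (h i \<bullet>c f i))"
      proof (rule sum_mono)
        fix i assume "i \<in> U1"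
        then have i: "i < N" using U1sub by auto
        have "cmod (f i \<bullet>c h i) = cmod (h i \<bullet>c f i)"
          using inner_sym[OF hc[OF i] fc[OF i]] by (metis complex_mod_cnj)
        then show "Re (f i \<bullet>c h i) \<le> cmod (h i \<bullet>c f i)" using complex_Re_le_cmod by metis
      qed
      also have "\<dots> < (\<Sum>i\<in>U1. t i)"
        using small fin U1ne by (intro sum_strict_mono) auto
      finally show False by simp
    qed
    then obtain i where iU: "i \<in> U1" and ci: "c \<le> T i" by blast
    have "T i \<le> Max (T ` {..<N})" using iU unfolding U1_def by (intro Max_ge) auto
    then show ?thesis using ci RT by simp
  qed
  have "Inf {R1p n N p f g' | g'. is_dual_frame K n N f g'} = c"
  proof (rule cInf_eq_minimum)
    show "c \<in> {R1p n N p f g' | g'. is_dual_frame K n N f g'}" using Rg canonical_dual by force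
    fix x assume "x \<in> {R1p n N p f g' | g'. is_dual_frame K n N f g'}"
    then show "c \<le> x" using lower by blast
  qed
  then show ?thesis unfolding prob_spec_opt_dual_def gg using canonical_dual Rg by simp
qed

end

theorem proposition3p2:
  fixes K :: "complex set" and n N :: nat and f :: "nat \<Rightarrow> complex vec" and p :: "nat \<Rightarrow> real"
  assumes field: "K = \<real> \<or> K = UNIV"
    and npos: "0 < n"
    and Nn: "N \<ge> n"
    and frame: "is_frame K n N f"
    and prob: "prob_seq N p"
    and wdef: "\<forall>i<N. (\<Sum>j<N. p j) - p i \<noteq> 0"
  defines "S \<equiv> frame_op n N f"
  defines "a \<equiv> (\<lambda>i. weight n N p i * norm_sq (inv_sqrt_mat n S *\<^sub>v f i))"
  defines "c \<equiv> Max (a ` {..<N})"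
  defines "U1 \<equiv> {i. i < N \<and> a i = c}"
  defines "U2 \<equiv> {..<N} - U1"
  assumes inter: "kspan K n f U1 \<inter> kspan K n f U2 = {0\<^sub>v n}"
  shows "prob_spec_opt_dual K n N p f (\<lambda>i. inv_mat n S *\<^sub>v f i)"
proof -
  have fcx: "fctx K n N f" by (rule fctx.intro[OF field frame])
  show ?thesis
    using fctx.main[OF fcx npos Nn prob wdef] inter unfolding U1_def U2_def c_def a_def S_def by blast
qed

end
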